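(* Let $(\mathfrak{A},\mathfrak{A}_0)$ be a $*$-semisimple Banach quasi $*$-algebra with unit $\mathbb{1}$. Then the set $\mathfrak{A}_b$ of bounded elements of $\mathfrak{A}$ is a $*$-semisimple Banach algebra. Moreover, $\mathfrak{A}_b = R_w(\mathfrak{A})\cap L_w(\mathfrak{A})$.
   Context: A quasi $*$-algebra $(\mathfrak{A},\mathfrak{A}_0)$ consists of a vector space $\mathfrak{A}$ and a $*$-algebra $\mathfrak{A}_0\subseteq\mathfrak{A}$ such that $\mathfrak{A}$ carries an involution extending that of $\mathfrak{A}_0$, $\mathfrak{A}$ is an $\mathfrak{A}_0$-bimodule whose module multiplications extend the multiplication of $\mathfrak{A}_0$ with $(xa)y=x(ay)$, $a(xy)=(ax)y$ for $a\in\mathfrak{A}$, $x,y\in\mathfrak{A}_0$, and $(ax)^*=x^*a^*$. It is unital if there is $\mathbb{1}\in\mathfrak{A}_0$ with $a\mathbb{1}=a=\mathbb{1}a$ for all $a\in\mathfrak{A}$. It is a Banach quasi $*$-algebra if $\mathfrak{A}$ is a Banach space with norm $\|\cdot\|$ such that $\|a^*\|=\|a\|$, $\mathfrak{A}_0$ is dense in $\mathfrak{A}$, and for each $x\in\mathfrak{A}_0$ the map $a\mapsto ax$ is continuous on $\mathfrak{A}$. Let $\mathcal{S}_{\mathfrak{A}_0}(\mathfrak{A})$ be the set of sesquilinear forms $\varphi$ on $\mathfrak{A}\times\mathfrak{A}$ with $\varphi(a,a)\ge 0$, $\varphi(ax,y)=\varphi(x,a^*y)$ for $a\in\mathfrak{A}$,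 $x,y\in\mathfrak{A}_0$, and $|\varphi(a,b)|\le\|a\|\|b\|$ for all $a,b\in\mathfrak{A}$. The Banach quasi $*$-algebra is $*$-semisimple if $\varphi(a,a)=0$ for all $\varphi\in\mathcal{S}_{\mathfrak{A}_0}(\mathfrak{A})$ implies $a=0$. In that case, for $a,b\in\mathfrak{A}$ the weak product $a\,\square\, b$ is well defined if there is a (necessarily unique) $c\in\mathfrak{A}$ with $\varphi(bx,a^*y)=\varphi(cx,y)$ for all $x,y\in\mathfrak{A}_0$ and all $\varphi\in\mathcal{S}_{\mathfrak{A}_0}(\mathfrak{A})$; then $a\,\square\, b:=c$. $R_w(\mathfrak{A})$ (resp. $L_w(\mathfrak{A})$) is the set of $b\in\mathfrak{A}$ such that $a\,\square\, b$ (resp. $b\,\square\, a$) is well defined for every $a\in\mathfrak{A}$. An element $a\in\mathfrak{A}$ is bounded if the maps $L_a:\mathfrak{A}_0\to\mathfrak{A}$, $x\mapsto ax$, and $R_a:\mathfrak{A}_0\to\mathfrak{A}$, $x\mapsto xa$, are $\|\cdot\|$-continuous; $\mathfrak{A}_b$ denotes the set of bounded elements. *)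

theory Defs
  imports "HOL-Analysis.Analysis" "HOL-Library.Complex_Order"
begin

text \<open>
The Banach space \<open>A\<close> is the whole type \<open>'a\<close> (a real Banach space by
its type class), made into a complex Banach space by an explicit complex scalar
multiplication \<open>sc\<close> extending the real one and compatible with the norm.  A single operation \<open>m\<close> represents all
products: \<open>m a x\<close> (= ax) and \<open>m x a\<close> (= xa) are meaningful whenever one argument
lies in \<open>A0\<close>; on \<open>A0 \<times> A0\<close> it is the multiplication of \<open>A0\<close>.  \<open>invl\<close> is the involution.
\<close>

definition complex_banach :: "(complex \<Rightarrow> 'a::banach \<Rightarrow> 'a) \<Rightarrow> bool" where
  "complex_banach sc \<longleftrightarrow>
     (\<forall>r x. sc (complex_of_real r) x = r *\<^sub>R x) \<and>
     (\<forall>x. sc 1 x = x) \<and>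
     (\<forall>c d x. sc (c * d) x = sc c (sc d x)) \<and>
     (\<forall>c x y. sc c (x + y) = sc c x + sc c y) \<and>
     (\<forall>c d x. sc (c + d) x = sc c x + sc d x) \<and>
     (\<forall>c x. norm (sc c x) = cmod c * norm x)"

definition unital_quasi_star_algebra ::
  "(complex \<Rightarrow> 'a::banach \<Rightarrow> 'a) \<Rightarrow> 'a set \<Rightarrow> ('a \<Rightarrow> 'a \<Rightarrow> 'a) \<Rightarrow> ('a \<Rightarrow> 'a) \<Rightarrow> 'a \<Rightarrow> bool" where
  "unital_quasi_star_algebra sc A0 m invl u \<longleftrightarrow>
     \<comment> \<open>A0 is a complex subspace\<close>
     0 \<in> A0 \<and> (\<forall>x\<in>A0. \<forall>y\<in>A0. x + y \<in> A0) \<and> (\<forall>c. \<forall>x\<in>A0. sc c x \<in> A0) \<and>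
     \<comment> \<open>A0 is closed under product and involution\<close>
     (\<forall>x\<in>A0. \<forall>y\<in>A0. m x y \<in> A0) \<and> (\<forall>x\<in>A0. invl x \<in> A0) \<and>
     \<comment> \<open>involution on A\<close>
     (\<forall>a. invl (invl a) = a) \<and> (\<forall>a b. invl (a + b) = invl a + invl b) \<and>
     (\<forall>c a. invl (sc c a) = sc (cnj c) (invl a)) \<and>
     \<comment> \<open>bimodule: bilinearity of the module multiplications\<close>
     (\<forall>a b. \<forall>x\<in>A0. m (a + b) x = m a x + m b x \<and> m x (a + b) = m x a + m x b) \<and>
     (\<forall>a. \<forall>x\<in>A0. \<forall>y\<in>A0. m a (x + y) = m a x + m a y \<and> m (x + y) a = m x a + m y a) \<and>
     (\<forall>c a. \<forall>x\<in>A0. m (sc c a) x = sc c (m a x) \<and> m a (sc c x) = sc c (m a x)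
                     \<and> m x (sc c a) = sc c (m x a) \<and> m (sc c x) a = sc c (m x a)) \<and>
     \<comment> \<open>bimodule associativity laws\<close>
     (\<forall>a. \<forall>x\<in>A0. \<forall>y\<in>A0. m (m x a) y = m x (m a y)) \<and>
     (\<forall>a. \<forall>x\<in>A0. \<forall>y\<in>A0. m a (m x y) = m (m a x) y) \<and>
     (\<forall>a. \<forall>x\<in>A0. \<forall>y\<in>A0. m (m x y) a = m x (m y a)) \<and>
     \<comment> \<open>(ax)* = x* a*\<close>
     (\<forall>a. \<forall>x\<in>A0. invl (m a x) = m (invl x) (invl a)) \<and>
     \<comment> \<open>unit\<close>
     u \<in> A0 \<and> (\<forall>a. m a u = a \<and> m u a = a)"

definition banach_quasi_star_algebra ::
  "(complex \<Rightarrow> 'a::banach \<Rightarrow> 'a) \<Rightarrow> 'a set \<Rightarrow> ('a \<Rightarrow> 'a \<Rightarrow> 'a) \<Rightarrow> ('a \<Rightarrow> 'a) \<Rightarrow> 'a \<Rightarrow> bool" where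
  "banach_quasi_star_algebra sc A0 m invl u \<longleftrightarrow>
     complex_banach sc \<and> unital_quasi_star_algebra sc A0 m invl u \<and>
     (\<forall>a. norm (invl a) = norm a) \<and> closure A0 = UNIV \<and>
     (\<forall>x\<in>A0. continuous_on UNIV (\<lambda>a. m a x))"

definition sesquilinear_on :: "'a set \<Rightarrow> (complex \<Rightarrow> 'a::real_vector \<Rightarrow> 'a) \<Rightarrow> ('a \<Rightarrow> 'a \<Rightarrow> complex) \<Rightarrow> bool" where
  "sesquilinear_on B sc \<phi> \<longleftrightarrow>
     (\<forall>a\<in>B. \<forall>b\<in>B. \<forall>c\<in>B. \<phi> (a + b) c = \<phi> a c + \<phi> b c \<and> \<phi> c (a + b) = \<phi> c a + \<phi> c b) \<and>
     (\<forall>z. \<forall>a\<in>B. \<forall>b\<in>B. \<phi> (sc z a) b = z * \<phi> a b \<and> \<phi> a (sc z b) = cnj z * \<phi> a b)"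

definition S_forms ::
  "'a set \<Rightarrow> 'a set \<Rightarrow> ('a \<Rightarrow> 'a \<Rightarrow> 'a) \<Rightarrow> (complex \<Rightarrow> 'a::real_vector \<Rightarrow> 'a) \<Rightarrow> ('a \<Rightarrow> 'a) \<Rightarrow> ('a \<Rightarrow> real)
   \<Rightarrow> ('a \<Rightarrow> 'a \<Rightarrow> complex) set" where
  "S_forms B B0 m sc invl nrm = {\<phi>. sesquilinear_on B sc \<phi> \<and>
     (\<forall>a\<in>B. 0 \<le> \<phi> a a) \<and>
     (\<forall>a\<in>B. \<forall>x\<in>B0. \<forall>y\<in>B0. \<phi> (m a x) y = \<phi> x (m (invl a) y)) \<and>
     (\<forall>a\<in>B. \<forall>b\<in>B. cmod (\<phi> a b) \<le> nrm a * nrm b)}"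

definition star_semisimple ::
  "'a set \<Rightarrow> 'a set \<Rightarrow> ('a \<Rightarrow> 'a \<Rightarrow> 'a) \<Rightarrow> (complex \<Rightarrow> 'a::real_vector \<Rightarrow> 'a) \<Rightarrow> ('a \<Rightarrow> 'a) \<Rightarrow> ('a \<Rightarrow> real) \<Rightarrow> bool" where
  "star_semisimple B B0 m sc invl nrm \<longleftrightarrow>
     (\<forall>a\<in>B. (\<forall>\<phi>\<in>S_forms B B0 m sc invl nrm. \<phi> a a = 0) \<longrightarrow> a = 0)"

definition is_weak_prod ::
  "'a set \<Rightarrow> ('a \<Rightarrow> 'a \<Rightarrow> 'a) \<Rightarrow> (complex \<Rightarrow> 'a::real_normed_vector \<Rightarrow> 'a) \<Rightarrow> ('a \<Rightarrow> 'a) \<Rightarrow> 'a \<Rightarrow> 'a \<Rightarrow> 'a \<Rightarrow> bool" where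
  "is_weak_prod A0 m sc invl a b c \<longleftrightarrow>
     (\<forall>\<phi>\<in>S_forms UNIV A0 m sc invl norm. \<forall>x\<in>A0. \<forall>y\<in>A0. \<phi> (m b x) (m (invl a) y) = \<phi> (m c x) y)"

definition weak_prod ::
  "'a set \<Rightarrow> ('a \<Rightarrow> 'a \<Rightarrow> 'a) \<Rightarrow> (complex \<Rightarrow> 'a::real_normed_vector \<Rightarrow> 'a) \<Rightarrow> ('a \<Rightarrow> 'a) \<Rightarrow> 'a \<Rightarrow> 'a \<Rightarrow> 'a" where
  "weak_prod A0 m sc invl a b = (THE c. is_weak_prod A0 m sc invl a b c)"

definition Rw :: "'a set \<Rightarrow> ('a \<Rightarrow> 'a \<Rightarrow> 'a) \<Rightarrow> (complex \<Rightarrow> 'a::real_normed_vector \<Rightarrow> 'a) \<Rightarrow> ('a \<Rightarrow> 'a) \<Rightarrow> 'a set" where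
  "Rw A0 m sc invl = {b. \<forall>a. \<exists>c. is_weak_prod A0 m sc invl a b c}"

definition Lw :: "'a set \<Rightarrow> ('a \<Rightarrow> 'a \<Rightarrow> 'a) \<Rightarrow> (complex \<Rightarrow> 'a::real_normed_vector \<Rightarrow> 'a) \<Rightarrow> ('a \<Rightarrow> 'a) \<Rightarrow> 'a set" where
  "Lw A0 m sc invl = {b. \<forall>a. \<exists>c. is_weak_prod A0 m sc invl b a c}"

definition bounded_elems :: "'a set \<Rightarrow> ('a \<Rightarrow> 'a \<Rightarrow> 'a::real_normed_vector) \<Rightarrow> 'a set" where
  "bounded_elems A0 m = {a. continuous_on A0 (\<lambda>x. m a x) \<and> continuous_on A0 (\<lambda>x. m x a)}"

definition bnorm :: "'a set \<Rightarrow> ('a \<Rightarrow> 'a \<Rightarrow> 'a::real_normed_vector) \<Rightarrow> 'a \<Rightarrow> real" where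
  "bnorm A0 m a = max (SUP x\<in>{x\<in>A0. norm x \<le> 1}. norm (m a x))
                      (SUP x\<in>{x\<in>A0. norm x \<le> 1}. norm (m x a))"

definition banach_star_algebra_on ::
  "'a set \<Rightarrow> (complex \<Rightarrow> 'a::real_vector \<Rightarrow> 'a) \<Rightarrow> ('a \<Rightarrow> 'a \<Rightarrow> 'a) \<Rightarrow> ('a \<Rightarrow> 'a) \<Rightarrow> ('a \<Rightarrow> real) \<Rightarrow> bool" where
  "banach_star_algebra_on B sc p invl nrm \<longleftrightarrow>
     0 \<in> B \<and> (\<forall>a\<in>B. \<forall>b\<in>B. a + b \<in> B \<and> p a b \<in> B) \<and> (\<forall>c. \<forall>a\<in>B. sc c a \<in> B) \<and>
     (\<forall>a\<in>B. invl a \<in> B) \<and>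
     (\<forall>a\<in>B. \<forall>b\<in>B. \<forall>c\<in>B. p (p a b) c = p a (p b c)) \<and>
     (\<forall>a\<in>B. \<forall>b\<in>B. \<forall>c\<in>B. p (a + b) c = p a c + p b c \<and> p a (b + c) = p a b + p a c) \<and>
     (\<forall>z. \<forall>a\<in>B. \<forall>b\<in>B. p (sc z a) b = sc z (p a b) \<and> p a (sc z b) = sc z (p a b)) \<and>
     (\<forall>a\<in>B. \<forall>b\<in>B. invl (p a b) = p (invl b) (invl a)) \<and>
     (\<forall>a\<in>B. 0 \<le> nrm a \<and> (nrm a = 0 \<longleftrightarrow> a = 0)) \<and>
     (\<forall>a\<in>B. \<forall>b\<in>B. nrm (a + b) \<le> nrm a + nrm b) \<and>
     (\<forall>z. \<forall>a\<in>B. nrm (sc z a) = cmod z * nrm a) \<and>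
     (\<forall>a\<in>B. \<forall>b\<in>B. nrm (p a b) \<le> nrm a * nrm b) \<and>
     (\<forall>a\<in>B. nrm (invl a) = nrm a) \<and>
     (\<forall>X. (\<forall>n. X n \<in> B) \<longrightarrow>
          (\<forall>e>0. \<exists>N. \<forall>k\<ge>N. \<forall>n\<ge>N. nrm (X k - X n) < e) \<longrightarrow>
          (\<exists>l\<in>B. (\<lambda>n. nrm (X n - l)) \<longlonglongrightarrow> 0))"

end

theory Submission
  imports Defs
begin


lemma dense_eq:
  fixes f g :: "'a::topological_space \<Rightarrow> 'b::t2_space"
  assumes "closure D = UNIV" "continuous_on UNIV f" "continuous_on UNIV g" "\<And>x. x \<in> D \<Longrightarrow> f x = g x"
  shows "f x = g x"
proof -
  have "D \<subseteq> {x. f x = g x}" using assms(4) by auto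
  hence "closure D \<subseteq> {x. f x = g x}" using closed_Collect_eq[OF assms(2,3)] by (rule closure_minimal)
  thus ?thesis using assms(1) by auto
qed

lemma dense_le:
  fixes f g :: "'a::topological_space \<Rightarrow> real"
  assumes "closure D = UNIV" "continuous_on UNIV f" "continuous_on UNIV g" "\<And>x. x \<in> D \<Longrightarrow> f x \<le> g x"
  shows "f x \<le> g x"
proof -
  have "D \<subseteq> {x. f x \<le> g x}" using assms(4) by auto
  hence "closure D \<subseteq> {x. f x \<le> g x}" using closed_Collect_le[OF assms(2,3)] by (rule closure_minimal)
  thus ?thesis using assms(1) by auto
qed

lemma ext_bl:
  fixes f :: "'a::real_normed_vector \<Rightarrow> 'b::banach"
  assumes cl: "closure D = UNIV" and D0: "0 \<in> D" and Dsc: "\<And>r x. x\<in>D \<Longrightarrow> r *\<^sub>R x \<in> D"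
    and Dadd: "\<And>x y. x\<in>D \<Longrightarrow> y\<in>D \<Longrightarrow> x+y\<in>D"
    and fadd: "\<And>x y. x\<in>D \<Longrightarrow> y\<in>D \<Longrightarrow> f (x+y) = f x + f y"
    and fsc: "\<And>r x. x\<in>D \<Longrightarrow> f (r *\<^sub>R x) = r *\<^sub>R f x"
    and cont: "continuous_on D f"
  shows "\<exists>g. bounded_linear g \<and> (\<forall>x\<in>D. g x = f x)"
proof -
  have f0: "f 0 = 0" using fsc[OF D0, of 0] by simp
  obtain d where d: "d > 0" "\<And>x. x \<in> D \<Longrightarrow> dist x 0 < d \<Longrightarrow> dist (f x) (f 0) < 1"
    using cont D0 unfolding continuous_on_iff by (metis zero_less_one)
  define K where "K = 2 / d"
  have K0: "K \<ge> 0" using d by (simp add: K_def)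
  have bound: "norm (f x) \<le> K * norm x" if x: "x \<in> D" for x
  proof (cases "x = 0")
    case True thus ?thesis by (simp add: f0)
  next
    case False
    define s where "s = d / (2 * norm x)"
    have s0: "s > 0" using False d by (simp add: s_def)
    have "norm (s *\<^sub>R x) < d" using False d s0 by (simp add: s_def)
    hence "norm (f (s *\<^sub>R x)) < 1" using d(2)[OF Dsc[OF x]] by (simp add: f0)
    hence "s * norm (f x) < 1" using s0 by (simp add: fsc[OF x])
    hence "norm (f x) < 1 / s" using s0 by (simp add: field_simps)
    thus ?thesis using False d by (simp add: s_def K_def field_simps)
  qed
  have fdiff: "f x - f y = f (x - y)" if "x \<in> D" "y \<in> D" for x y
  proof -
    have "x - y = x + (-1) *\<^sub>R y" by simp
    hence "f (x - y) = f x + (-1) *\<^sub>R f y" using that by (simp only: fadd Dsc fsc)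
    thus ?thesis by simp
  qed
  have Dd: "x - y \<in> D" if "x \<in> D" "y \<in> D" for x y
  proof -
    have "x - y = x + (-1) *\<^sub>R y" by simp
    thus ?thesis using that Dadd Dsc by metis
  qed
  have uc: "uniformly_continuous_on D f"
    unfolding uniformly_continuous_on_def
  proof (intro allI impI)
    fix e :: real assume e: "e > 0"
    show "\<exists>d>0. \<forall>x\<in>D. \<forall>x'\<in>D. dist x' x < d \<longrightarrow> dist (f x') (f x) < e"
    proof (intro exI[of _ "e / (K + 1)"] conjI ballI impI)
      show "e / (K + 1) > 0" using e K0 by simp
      fix x x' assume xx: "x \<in> D" "x' \<in> D" "dist x' x < e / (K + 1)"
      have "dist (f x') (f x) = norm (f (x' - x))" by (simp add: dist_norm fdiff xx)
      also have "\<dots> \<le> K * norm (x' - x)" by (rule bound[OF Dd[OF xx(2,1)]])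
      also have "\<dots> \<le> K * (e / (K + 1))" using xx(3) K0 by (intro mult_left_mono) (auto simp: dist_norm)
      also have "\<dots> < e" using e K0 by (simp add: field_simps)
      finally show "dist (f x') (f x) < e" .
    qed
  qed
  obtain g where g: "uniformly_continuous_on (closure D) g" "\<And>x. x \<in> D \<Longrightarrow> f x = g x"
    using uniformly_continuous_on_extension_on_closure[OF uc] by metis
  have gc: "continuous_on UNIV g" using g(1) cl uniformly_continuous_imp_continuous by metis
  have gadd: "g (x + y) = g x + g y" for x y
  proof -
    have 1: "g (x + y) = g x + g y" if y: "y \<in> D" for x y
      by (rule dense_eq[OF cl, of "\<lambda>x. g (x + y)" "\<lambda>x. g x + g y"])
         (use y gc in \<open>auto intro!: continuous_intros continuous_on_compose2[OF gc] simp: g(2)[symmetric] fadd Dadd\<close>)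
    show ?thesis
      by (rule dense_eq[OF cl, of "\<lambda>y. g (x + y)" "\<lambda>y. g x + g y"])
         (use gc 1 in \<open>auto intro!: continuous_intros continuous_on_compose2[OF gc]\<close>)
  qed
  have gsc: "g (r *\<^sub>R x) = r *\<^sub>R g x" for r x
    by (rule dense_eq[OF cl, of "\<lambda>x. g (r *\<^sub>R x)" "\<lambda>x. r *\<^sub>R g x"])
       (use gc in \<open>auto intro!: continuous_intros continuous_on_compose2[OF gc] simp: g(2)[symmetric] fsc Dsc\<close>)
  have gb: "norm (g x) \<le> norm x * K" for x
    by (rule dense_le[OF cl, of "\<lambda>x. norm (g x)" "\<lambda>x. norm x * K"])
       (use gc in \<open>auto intro!: continuous_intros continuous_on_compose2[OF gc] simp: g(2)[symmetric] bound mult.commute\<close>)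
  have "bounded_linear g" by (rule bounded_linear_intro[OF gadd gsc gb])
  thus ?thesis using g(2) by metis
qed



lemma baire_some_interior:
  fixes F :: "nat \<Rightarrow> 'a::banach set"
  assumes "\<And>n. closed (F n)" "(\<Union>n. F n) = UNIV"
  shows "\<exists>n. interior (F n) \<noteq> {}"
proof (rule ccontr)
  assume "\<not> ?thesis"
  hence "euclidean interior_of \<Union>(range F) = {}"
    using assms(1)
    by (intro Baire_category_alt) (auto simp: completely_metrizable_space_euclidean closed_closedin[symmetric])
  thus False using assms(2) by simp
qed

lemma closed_graph_bounded:
  fixes T :: "'a::banach \<Rightarrow> 'b::banach"
  assumes lin: "linear T"
    and cg: "\<And>X a c. X \<longlonglongrightarrow> a \<Longrightarrow> (\<lambda>n. T (X n)) \<longlonglongrightarrow> c \<Longrightarrow> T a = c"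
  shows "bounded_linear T"
proof -
  interpret linear T by fact
  define F where "F n = closure {x. norm (T x) \<le> real n}" for n
  have "(\<Union>n. F n) = UNIV"
  proof -
    have "x \<in> F (nat \<lceil>norm (T x)\<rceil>)" for x
      unfolding F_def by (rule closure_subset[THEN subsetD]) (simp add: real_nat_ceiling_ge)
    thus ?thesis by blast
  qed
  then obtain n where "interior (F n) \<noteq> {}"
    using baire_some_interior[of F] unfolding F_def by auto
  then obtain p where "p \<in> interior (F n)" by auto
  then obtain r where r: "r > 0" "ball p r \<subseteq> F n"
    by (meson open_contains_ball open_interior interior_subset subset_trans)
  define C where "C = real n"
  have C0: "C \<ge> 0" by (simp add: C_def)
  have ball0: "\<exists>y. norm (T y) \<le> C \<and> norm (z - y) < d" if "norm z < r" "d > 0" for z d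
  proof -
    have "p + z \<in> F n" "p - z \<in> F n" using r that by (auto simp: dist_norm)
    then obtain s t where s: "s \<in> {x. norm (T x) \<le> real n}" "dist s (p + z) < d"
      and t: "t \<in> {x. norm (T x) \<le> real n}" "dist t (p - z) < d"
      unfolding F_def closure_approachable using \<open>d > 0\<close> by metis
    define y where "y = (1/2) *\<^sub>R (s - t)"
    have "norm (T y) = (1/2) * norm (T s - T t)" by (simp add: y_def scale diff)
    also have "\<dots> \<le> (1/2) * (norm (T s) + norm (T t))" by (simp add: norm_triangle_ineq4)
    also have "\<dots> \<le> C" using s t by (simp add: C_def)
    finally have 1: "norm (T y) \<le> C" .
    have "z - y = (1/2) *\<^sub>R ((p + z - s) - (p - z - t))"
      by (simp add: y_def algebra_simps) (metis scaleR_add_left field_sum_of_halves scaleR_one)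
    hence "norm (z - y) = (1/2) * norm ((p + z - s) - (p - z - t))" by simp
    also have "\<dots> \<le> (1/2) * (norm (p + z - s) + norm (p - z - t))"
      by (intro mult_left_mono norm_triangle_ineq4) simp
    also have "\<dots> < d" using s t by (simp add: dist_norm norm_minus_commute)
    finally show ?thesis using 1 by blast
  qed
  have K: "\<exists>y. norm (T y) \<le> C * t \<and> norm (x - y) < d" if xt: "norm x < r * t" "d > 0" "t > 0" for x t d
  proof -
    have "norm ((1/t) *\<^sub>R x) < r" using that by (simp add: field_simps)
    then obtain y where y: "norm (T y) \<le> C" "norm ((1/t) *\<^sub>R x - y) < d / t"
      using ball0[of "(1/t) *\<^sub>R x" "d/t"] xt by (auto simp: divide_pos_pos)
    have "norm (T (t *\<^sub>R y)) = t * norm (T y)" using that by (simp add: scale)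
    also have "\<dots> \<le> C * t" using y that by (simp add: mult.commute)
    finally have 1: "norm (T (t *\<^sub>R y)) \<le> C * t" .
    have "x - t *\<^sub>R y = t *\<^sub>R ((1/t) *\<^sub>R x - y)" using that by (simp add: algebra_simps)
    hence "norm (x - t *\<^sub>R y) = t * norm ((1/t) *\<^sub>R x - y)" using that by simp
    also have "\<dots> < d" using y that by (simp add: field_simps)
    finally show ?thesis using 1 by blast
  qed
  have "\<forall>x k. \<exists>y. norm x < r / 2^k \<longrightarrow> norm (T y) \<le> C / 2^k \<and> norm (x - y) < r / 2^(Suc k)"
  proof (intro allI)
    fix x :: 'a and k :: nat
    show "\<exists>y. norm x < r / 2^k \<longrightarrow> norm (T y) \<le> C / 2^k \<and> norm (x - y) < r / 2^(Suc k)"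
      using K[of x "1/2^k" "r / 2^(Suc k)"] r by (auto simp: field_simps)
  qed
  then obtain Y where Y: "\<And>x k. norm x < r / 2^k \<Longrightarrow> norm (T (Y x k)) \<le> C / 2^k \<and> norm (x - Y x k) < r / 2^(Suc k)"
    by metis
  have main: "norm (T x) \<le> 2 * C" if x: "norm x < r" for x
  proof -
    define xs where "xs = rec_nat x (\<lambda>k z. z - Y z k)"
    have xs0: "xs 0 = x" and xsS: "\<And>k. xs (Suc k) = xs k - Y (xs k) k" by (simp_all add: xs_def)
    define y where "y k = Y (xs k) k" for k
    have xsb: "norm (xs k) < r / 2^k" for k
    proof (induction k)
      case 0 thus ?case using x xs0 by simp
    next
      case (Suc k) thus ?case using Y[OF Suc] xsS by (simp add: y_def)
    qed
    have ty: "norm (T (y k)) \<le> C / 2^k" for k using Y[OF xsb] y_def by simp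
    have psum: "(\<Sum>i<k. y i) = x - xs k" for k
      by (induction k) (simp_all add: xs0 xsS y_def)
    have "(\<lambda>k. xs k) \<longlonglongrightarrow> 0"
    proof (rule tendsto_norm_zero_cancel, rule Lim_null_comparison)
      show "\<forall>\<^sub>F k in sequentially. norm (norm (xs k)) \<le> r * (1/2)^k"
        using xsb by (auto intro!: always_eventually less_imp_le simp: power_divide)
      show "(\<lambda>k. r * (1/2::real)^k) \<longlonglongrightarrow> 0"
        by (intro tendsto_mult_right_zero LIMSEQ_realpow_zero) auto
    qed
    hence S: "(\<lambda>k. \<Sum>i<k. y i) \<longlonglongrightarrow> x"
      unfolding psum using tendsto_diff[OF tendsto_const[of x], of xs 0 sequentially] by simp
    have sg: "summable (\<lambda>k. C * (1/2::real)^k)" by (intro summable_mult summable_geometric) auto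
    have sT: "summable (\<lambda>k. T (y k))"
      by (rule summable_comparison_test'[OF sg]) (use ty in \<open>simp add: power_divide\<close>)
    have "(\<lambda>k. T (\<Sum>i<k. y i)) \<longlonglongrightarrow> (\<Sum>k. T (y k))"
      unfolding sum using summable_LIMSEQ[OF sT] by simp
    from cg[OF S this] have "T x = (\<Sum>k. T (y k))" .
    also have "norm \<dots> \<le> (\<Sum>k. C * (1/2::real)^k)"
      by (rule norm_suminf_le) (use sg ty in \<open>auto simp: power_divide\<close>)
    also have "\<dots> = 2 * C" using suminf_geometric[of "1/2::real"] by (simp add: suminf_mult)
    finally show ?thesis .
  qed
  show ?thesis
  proof (rule bounded_linear_intro[where K = "4 * C / r"])
    show "T (x + y) = T x + T y" for x y by (rule add)
    show "T (s *\<^sub>R x) = s *\<^sub>R T x" for s x by (rule scale)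
    show "norm (T x) \<le> norm x * (4 * C / r)" for x
    proof (cases "x = 0")
      case True thus ?thesis by (simp add: zero)
    next
      case False
      define s where "s = r / (2 * norm x)"
      have s0: "s > 0" using False r by (simp add: s_def)
      have "norm (s *\<^sub>R x) < r" using False r s0 by (simp add: s_def)
      hence "norm (T (s *\<^sub>R x)) \<le> 2 * C" by (rule main)
      hence "s * norm (T x) \<le> 2 * C" using s0 by (simp add: scale)
      thus ?thesis using False r s0 by (simp add: s_def field_simps)
    qed
  qed
qed



locale bqa =
  fixes sc :: "complex \<Rightarrow> 'a::banach \<Rightarrow> 'a"
    and A0 :: "'a set" and m :: "'a \<Rightarrow> 'a \<Rightarrow> 'a" and invl :: "'a \<Rightarrow> 'a" and u :: 'a
  assumes B: "banach_quasi_star_algebra sc A0 m invl u"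
    and SS: "star_semisimple UNIV A0 m sc invl norm"
begin

abbreviation "SF \<equiv> S_forms UNIV A0 m sc invl norm"

lemma CB: "complex_banach sc" and Q: "unital_quasi_star_algebra sc A0 m invl u"
  and norm_invl: "norm (invl a) = norm a" and dense: "closure A0 = UNIV"
  and contR: "x \<in> A0 \<Longrightarrow> continuous_on UNIV (\<lambda>a. m a x)"
  using B unfolding banach_quasi_star_algebra_def by auto

lemma sc_real: "sc (complex_of_real r) x = r *\<^sub>R x" and sc_one: "sc 1 x = x"
  and sc_mult: "sc (c * d) x = sc c (sc d x)" and sc_add: "sc c (x + y) = sc c x + sc c y"
  and sc_addl: "sc (c + d) x = sc c x + sc d x" and norm_sc: "norm (sc c x) = cmod c * norm x"
  using CB unfolding complex_banach_def by auto

lemma A00: "0 \<in> A0" and A0add: "x\<in>A0 \<Longrightarrow> y\<in>A0 \<Longrightarrow> x + y \<in> A0" and A0sc: "x\<in>A0 \<Longrightarrow> sc c x \<in> A0"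
  and A0m: "x\<in>A0 \<Longrightarrow> y\<in>A0 \<Longrightarrow> m x y \<in> A0" and A0invl: "x\<in>A0 \<Longrightarrow> invl x \<in> A0"
  and invl_invl: "invl (invl a) = a" and invl_add: "invl (a + b) = invl a + invl b"
  and invl_sc: "invl (sc c a) = sc (cnj c) (invl a)"
  and maddl: "x\<in>A0 \<Longrightarrow> m (a + b) x = m a x + m b x" and maddr: "x\<in>A0 \<Longrightarrow> m x (a + b) = m x a + m x b"
  and maddl0: "x\<in>A0 \<Longrightarrow> y\<in>A0 \<Longrightarrow> m a (x + y) = m a x + m a y"
  and maddr0: "x\<in>A0 \<Longrightarrow> y\<in>A0 \<Longrightarrow> m (x + y) a = m x a + m y a"
  and msc1: "x\<in>A0 \<Longrightarrow> m (sc c a) x = sc c (m a x)" and msc2: "x\<in>A0 \<Longrightarrow> m a (sc c x) = sc c (m a x)"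
  and msc3: "x\<in>A0 \<Longrightarrow> m x (sc c a) = sc c (m x a)" and msc4: "x\<in>A0 \<Longrightarrow> m (sc c x) a = sc c (m x a)"
  and assoc1: "x\<in>A0 \<Longrightarrow> y\<in>A0 \<Longrightarrow> m (m x a) y = m x (m a y)"
  and assoc2: "x\<in>A0 \<Longrightarrow> y\<in>A0 \<Longrightarrow> m a (m x y) = m (m a x) y"
  and assoc3: "x\<in>A0 \<Longrightarrow> y\<in>A0 \<Longrightarrow> m (m x y) a = m x (m y a)"
  and invl_m: "x\<in>A0 \<Longrightarrow> invl (m a x) = m (invl x) (invl a)"
  and uA0: "u \<in> A0" and mu1: "m a u = a" and mu2: "m u a = a"
  using Q unfolding unital_quasi_star_algebra_def by auto

lemma sc_scaleR: "sc z (r *\<^sub>R x) = r *\<^sub>R sc z x"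
proof -
  have "sc z (r *\<^sub>R x) = sc z (sc (complex_of_real r) x)" by (simp add: sc_real)
  also have "\<dots> = sc (complex_of_real r) (sc z x)" by (simp only: sc_mult[symmetric] mult.commute)
  finally show ?thesis by (simp add: sc_real)
qed

lemma bl_sc: "bounded_linear (sc z)"
  by (rule bounded_linear_intro[where K="cmod z"]) (simp_all add: sc_add sc_scaleR norm_sc mult.commute)

lemma sc_0: "sc z 0 = 0" by (rule linear_simps(3)[OF bl_sc])
lemma sc_minus: "sc z (- x) = - sc z x" by (rule linear_simps(4)[OF bl_sc])
lemma sc_diff: "sc z (x - y) = sc z x - sc z y" by (rule linear_simps(2)[OF bl_sc])
lemma sc_zero: "sc 0 x = 0" using sc_real[of 0] by simp

lemma A0scR: "x\<in>A0 \<Longrightarrow> r *\<^sub>R x \<in> A0" using A0sc[of x "complex_of_real r"] by (simp add: sc_real)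
lemma A0minus: "x\<in>A0 \<Longrightarrow> - x \<in> A0" using A0scR[of x "-1"] by simp
lemma A0diff: "x\<in>A0 \<Longrightarrow> y\<in>A0 \<Longrightarrow> x - y \<in> A0" using A0add[OF _ A0minus] by (simp)

lemma invl_scaleR: "invl (r *\<^sub>R a) = r *\<^sub>R invl a"
  using invl_sc[of "complex_of_real r" a] by (simp add: sc_real)

lemma bl_invl: "bounded_linear invl"
  by (rule bounded_linear_intro[where K=1]) (simp_all add: invl_add invl_scaleR norm_invl)

lemma cont_invl: "continuous_on S invl" by (rule linear_continuous_on[OF bl_invl])

lemma linR: "x\<in>A0 \<Longrightarrow> linear (\<lambda>a. m a x)"
  by (rule linearI) (simp_all add: maddl msc1[of x "complex_of_real r" for r, unfolded sc_real])

lemma bl_of_cont: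
  assumes "linear f" "continuous_on UNIV f" shows "bounded_linear (f :: 'a \<Rightarrow> 'a)"
proof -
  obtain g where g: "bounded_linear g" "\<forall>x\<in>UNIV. g x = f x"
    using ext_bl[of UNIV f] assms by (auto simp: linear_add linear_scale)
  have "g = f" using g(2) by auto
  thus ?thesis using g(1) by simp
qed

lemma bl_R: "x\<in>A0 \<Longrightarrow> bounded_linear (\<lambda>a. m a x)"
  by (rule bl_of_cont[OF linR contR])

lemma m_left_eq: "x\<in>A0 \<Longrightarrow> m x a = invl (m (invl a) (invl x))"
  using invl_m[of "invl x" "invl a"] by (simp add: A0invl invl_invl)

lemma bl_L: "x\<in>A0 \<Longrightarrow> bounded_linear (\<lambda>a. m x a)"
proof -
  assume x: "x \<in> A0"
  have "bounded_linear (\<lambda>a. invl (m (invl a) (invl x)))"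
    using bounded_linear_compose[OF bl_invl bounded_linear_compose[OF bl_R[OF A0invl[OF x]] bl_invl]] .
  thus ?thesis using m_left_eq[OF x] by simp
qed

lemma contR': "x\<in>A0 \<Longrightarrow> continuous_on S (\<lambda>a. m a x)"
  using linear_continuous_on[OF bl_R] by blast
lemma contL': "x\<in>A0 \<Longrightarrow> continuous_on S (\<lambda>a. m x a)"
  using linear_continuous_on[OF bl_L] by blast

lemma mR0: "x\<in>A0 \<Longrightarrow> m 0 x = 0" using linear_simps(3)[OF bl_R] .
lemma mL0: "x\<in>A0 \<Longrightarrow> m x 0 = 0" using linear_simps(3)[OF bl_L] .
lemma mR_diff: "x\<in>A0 \<Longrightarrow> m (a - b) x = m a x - m b x" using linear_simps(2)[OF bl_R] .
lemma mL_diff: "x\<in>A0 \<Longrightarrow> m x (a - b) = m x a - m x b" using linear_simps(2)[OF bl_L] .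
lemma mR_scaleR: "x\<in>A0 \<Longrightarrow> m (r *\<^sub>R a) x = r *\<^sub>R m a x" using linear_simps(5)[OF bl_R] by blast
lemma mL_scaleR: "x\<in>A0 \<Longrightarrow> m x (r *\<^sub>R a) = r *\<^sub>R m x a"
  using msc3[where c="complex_of_real r"] by (simp add: sc_real)
lemma mR0_scaleR: "x\<in>A0 \<Longrightarrow> m a (r *\<^sub>R x) = r *\<^sub>R m a x"
  using msc2[where c="complex_of_real r"] by (simp add: sc_real)
lemma mL0_scaleR: "x\<in>A0 \<Longrightarrow> m (r *\<^sub>R x) a = r *\<^sub>R m x a"
  using msc4[where c="complex_of_real r"] by (simp add: sc_real)

subsection \<open>Forms\<close>

lemma SF_D:
  assumes "\<phi> \<in> SF"
  shows "\<phi> (a + b) c = \<phi> a c + \<phi> b c" "\<phi> c (a + b) = \<phi> c a + \<phi> c b"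
    "\<phi> (sc z a) b = z * \<phi> a b" "\<phi> a (sc z b) = cnj z * \<phi> a b"
    "0 \<le> \<phi> a a" "cmod (\<phi> a b) \<le> norm a * norm b"
  using assms unfolding S_forms_def sesquilinear_on_def by auto

lemma SF_inv: "\<phi> \<in> SF \<Longrightarrow> x\<in>A0 \<Longrightarrow> y\<in>A0 \<Longrightarrow> \<phi> (m a x) y = \<phi> x (m (invl a) y)"
  unfolding S_forms_def by auto

lemma bl_phi1: "\<phi> \<in> SF \<Longrightarrow> bounded_linear (\<lambda>a. \<phi> a b)"
proof (rule bounded_linear_intro[where K="norm b"])
  assume p: "\<phi> \<in> SF"
  show "\<phi> (x + y) b = \<phi> x b + \<phi> y b" for x y using SF_D(1)[OF p] .
  show "\<phi> (r *\<^sub>R x) b = r *\<^sub>R \<phi> x b" for r x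
    using SF_D(3)[OF p, of "complex_of_real r" x b] by (simp add: sc_real scaleR_conv_of_real)
  show "norm (\<phi> x b) \<le> norm x * norm b" for x using SF_D(6)[OF p] by simp
qed

lemma bl_phi2: "\<phi> \<in> SF \<Longrightarrow> bounded_linear (\<lambda>b. \<phi> a b)"
proof (rule bounded_linear_intro[where K="norm a"])
  assume p: "\<phi> \<in> SF"
  show "\<phi> a (x + y) = \<phi> a x + \<phi> a y" for x y using SF_D(2)[OF p] .
  show "\<phi> a (r *\<^sub>R x) = r *\<^sub>R \<phi> a x" for r x
    using SF_D(4)[OF p, of a "complex_of_real r" x] by (simp add: sc_real scaleR_conv_of_real)
  show "norm (\<phi> a x) \<le> norm x * norm a" for x using SF_D(6)[OF p, of a x] by (simp add: mult.commute)
qed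

lemma cont_phi1: "\<phi> \<in> SF \<Longrightarrow> continuous_on S f \<Longrightarrow> continuous_on S (\<lambda>x. \<phi> (f x) b)"
  by (rule bounded_linear.continuous_on[OF bl_phi1])
lemma cont_phi2: "\<phi> \<in> SF \<Longrightarrow> continuous_on S f \<Longrightarrow> continuous_on S (\<lambda>x. \<phi> a (f x))"
  by (rule bounded_linear.continuous_on[OF bl_phi2])

lemma W: assumes p: "\<phi> \<in> SF" and x0: "x0 \<in> A0" and y: "y \<in> A0"
  shows "\<phi> (m x0 w) y = \<phi> w (m (invl x0) y)"
  by (rule dense_eq[OF dense, of "\<lambda>w. \<phi> (m x0 w) y" "\<lambda>w. \<phi> w (m (invl x0) y)"])
     (auto intro!: cont_phi1[OF p] contL'[OF x0] continuous_on_id simp: SF_inv[OF p _ y])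

lemma U': assumes "\<And>\<phi> y. \<phi> \<in> SF \<Longrightarrow> y \<in> A0 \<Longrightarrow> \<phi> c y = \<phi> c' y"
  shows "c = c'"
proof -
  have "\<phi> (c - c') (c - c') = 0" if p: "\<phi> \<in> SF" for \<phi>
  proof (rule dense_eq[OF dense, of "\<lambda>y. \<phi> (c - c') y" "\<lambda>y. 0"])
    show "continuous_on UNIV (\<lambda>y. \<phi> (c - c') y)" by (intro cont_phi2[OF p] continuous_on_id)
    show "\<phi> (c - c') y = 0" if "y \<in> A0" for y
      using assms[OF p that] linear_simps(2)[OF bl_phi1[OF p], of c c' y] by simp
  qed simp
  hence "c - c' = 0" using SS unfolding star_semisimple_def by blast
  thus ?thesis by simp
qed

lemma U: assumes "is_weak_prod A0 m sc invl a b c" "is_weak_prod A0 m sc invl a b c'"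
  shows "c = c'"
proof (rule U')
  fix \<phi> y assume "\<phi> \<in> SF" "y \<in> A0"
  thus "\<phi> c y = \<phi> c' y" using assms uA0 unfolding is_weak_prod_def by (metis mu1)
qed

lemma wp_eq: "is_weak_prod A0 m sc invl a b c \<Longrightarrow> weak_prod A0 m sc invl a b = c"
  unfolding weak_prod_def by (rule the_equality) (auto intro: U)

lemma wp_ex: "is_weak_prod A0 m sc invl a b c \<Longrightarrow> is_weak_prod A0 m sc invl a b (weak_prod A0 m sc invl a b)"
  using wp_eq by simp

end



context bqa begin

abbreviation "Ab \<equiv> bounded_elems A0 m"
abbreviation "P \<equiv> weak_prod A0 m sc invl"

definition opn :: "('a \<Rightarrow> 'a) \<Rightarrow> real" where
  "opn f = (SUP x\<in>{x\<in>A0. norm x \<le> 1}. norm (f x))"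

lemma bnorm_eq: "bnorm A0 m a = max (opn (\<lambda>x. m a x)) (opn (\<lambda>x. m x a))"
  by (simp add: bnorm_def opn_def)

definition "opb f \<longleftrightarrow> (\<exists>K. \<forall>x\<in>A0. norm (f x) \<le> K * norm x)"
definition "opl f \<longleftrightarrow> (\<forall>r x. x \<in> A0 \<longrightarrow> f (r *\<^sub>R x) = r *\<^sub>R f x)"

lemma op_bdd: assumes "opb f" shows "bdd_above ((\<lambda>x. norm (f x)) ` {x\<in>A0. norm x \<le> 1})"
proof -
  obtain K where K: "\<And>x. x\<in>A0 \<Longrightarrow> norm (f x) \<le> K * norm x" using assms unfolding opb_def by blast
  have "norm (f x) \<le> max K 0" if "x \<in> A0" "norm x \<le> 1" for x
  proof -
    have "K * norm x \<le> max K 0 * norm x" by (intro mult_right_mono) auto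
    also have "\<dots> \<le> max K 0" using that by (intro mult_left_le) auto
    finally show ?thesis using K[OF that(1)] by linarith
  qed
  thus ?thesis by (auto intro!: bdd_aboveI2)
qed

lemma op_upper: "opb f \<Longrightarrow> x \<in> A0 \<Longrightarrow> norm x \<le> 1 \<Longrightarrow> norm (f x) \<le> opn f"
  unfolding opn_def by (rule cSUP_upper[OF _ op_bdd]) auto

lemma op_ge0: "opb f \<Longrightarrow> opl f \<Longrightarrow> 0 \<le> opn f"
proof -
  assume b: "opb f" and l: "opl f"
  have "f 0 = 0" using l A00 unfolding opl_def by (metis scaleR_zero_left)
  thus ?thesis using op_upper[OF b A00] by simp
qed

lemma op_least: "(\<And>x. x \<in> A0 \<Longrightarrow> norm x \<le> 1 \<Longrightarrow> norm (f x) \<le> c) \<Longrightarrow> opn f \<le> c"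
  unfolding opn_def by (rule cSUP_least) (use A00 in auto)

lemma op_le: assumes b: "opb f" and l: "opl f" and x: "x \<in> A0"
  shows "norm (f x) \<le> opn f * norm x"
proof (cases "x = 0")
  case True
  have "f 0 = 0" using l A00 unfolding opl_def by (metis scaleR_zero_left)
  thus ?thesis using True by simp
next
  case False
  define y where "y = (1 / norm x) *\<^sub>R x"
  have y: "y \<in> A0" "norm y \<le> 1" using False A0scR[OF x] by (auto simp: y_def)
  have "norm (f y) = norm (f x) / norm x" using l x unfolding opl_def y_def by simp
  hence e: "norm (f x) = norm x * norm (f y)" using False by simp
  show ?thesis using mult_left_mono[OF op_upper[OF b y] norm_ge_zero[of x]] e by (simp add: mult.commute)
qed

lemma op_reindex:
  assumes "\<And>x. x \<in> A0 \<Longrightarrow> norm (f x) = norm (g (invl x))"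
  shows "opn f = opn g"
proof -
  have "(\<lambda>x. norm (f x)) ` {x\<in>A0. norm x \<le> 1} = (\<lambda>x. norm (g x)) ` {x\<in>A0. norm x \<le> 1}"
  proof (intro equalityI subsetI)
    fix t assume "t \<in> (\<lambda>x. norm (f x)) ` {x\<in>A0. norm x \<le> 1}"
    then obtain x where x: "x \<in> A0" "norm x \<le> 1" "t = norm (f x)" by auto
    thus "t \<in> (\<lambda>x. norm (g x)) ` {x\<in>A0. norm x \<le> 1}"
      using assms[OF x(1)] A0invl[OF x(1)] norm_invl[of x] by (intro rev_image_eqI[of "invl x"]) auto
  next
    fix t assume "t \<in> (\<lambda>x. norm (g x)) ` {x\<in>A0. norm x \<le> 1}"
    then obtain x where x: "x \<in> A0" "norm x \<le> 1" "t = norm (g x)" by auto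
    thus "t \<in> (\<lambda>x. norm (f x)) ` {x\<in>A0. norm x \<le> 1}"
      using assms[OF A0invl[OF x(1)]] A0invl[OF x(1)] norm_invl[of x] invl_invl[of x]
      by (intro rev_image_eqI[of "invl x"]) auto
  qed
  thus ?thesis unfolding opn_def by simp
qed

lemma opl_L: "opl (\<lambda>x. m a x)" unfolding opl_def using mR0_scaleR by auto
lemma opl_R: "opl (\<lambda>x. m x a)" unfolding opl_def using mL0_scaleR by auto

subsection \<open>Extensions\<close>

lemma AbD: "a \<in> Ab \<Longrightarrow> continuous_on A0 (\<lambda>x. m a x)" "a \<in> Ab \<Longrightarrow> continuous_on A0 (\<lambda>x. m x a)"
  unfolding bounded_elems_def by auto
lemma AbI: "continuous_on A0 (\<lambda>x. m a x) \<Longrightarrow> continuous_on A0 (\<lambda>x. m x a) \<Longrightarrow> a \<in> Ab"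
  unfolding bounded_elems_def by auto

definition "Lx a = (SOME g. bounded_linear g \<and> (\<forall>x\<in>A0. g x = m a x))"
definition "Rx a = (SOME g. bounded_linear g \<and> (\<forall>x\<in>A0. g x = m x a))"

lemma Lx: assumes "a \<in> Ab" shows "bounded_linear (Lx a)" "x \<in> A0 \<Longrightarrow> Lx a x = m a x"
proof -
  have "\<exists>g. bounded_linear g \<and> (\<forall>x\<in>A0. g x = m a x)"
    by (rule ext_bl[OF dense A00 A0scR A0add maddl0 mR0_scaleR AbD(1)[OF assms]])
  hence "bounded_linear (Lx a) \<and> (\<forall>x\<in>A0. Lx a x = m a x)" unfolding Lx_def by (rule someI_ex)
  thus "bounded_linear (Lx a)" "x \<in> A0 \<Longrightarrow> Lx a x = m a x" by auto
qed

lemma Rx: assumes "a \<in> Ab" shows "bounded_linear (Rx a)" "x \<in> A0 \<Longrightarrow> Rx a x = m x a"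
proof -
  have "\<exists>g. bounded_linear g \<and> (\<forall>x\<in>A0. g x = m x a)"
    by (rule ext_bl[OF dense A00 A0scR A0add maddr0 mL0_scaleR AbD(2)[OF assms]])
  hence "bounded_linear (Rx a) \<and> (\<forall>x\<in>A0. Rx a x = m x a)" unfolding Rx_def by (rule someI_ex)
  thus "bounded_linear (Rx a)" "x \<in> A0 \<Longrightarrow> Rx a x = m x a" by auto
qed

lemma cont_Lx: "a \<in> Ab \<Longrightarrow> continuous_on S (Lx a)" using linear_continuous_on[OF Lx(1)] by blast
lemma cont_Rx: "a \<in> Ab \<Longrightarrow> continuous_on S (Rx a)" using linear_continuous_on[OF Rx(1)] by blast

lemma opb_L: assumes "a \<in> Ab" shows "opb (\<lambda>x. m a x)"
proof -
  obtain K where "\<And>x. norm (Lx a x) \<le> norm x * K" using bounded_linear.bounded[OF Lx(1)[OF assms]] by blast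
  thus ?thesis unfolding opb_def using Lx(2)[OF assms] by (metis mult.commute)
qed

lemma opb_R: assumes "a \<in> Ab" shows "opb (\<lambda>x. m x a)"
proof -
  obtain K where "\<And>x. norm (Rx a x) \<le> norm x * K" using bounded_linear.bounded[OF Rx(1)[OF assms]] by blast
  thus ?thesis unfolding opb_def using Rx(2)[OF assms] by (metis mult.commute)
qed

abbreviation "nL a \<equiv> opn (\<lambda>x. m a x)"
abbreviation "nR a \<equiv> opn (\<lambda>x. m x a)"

lemma nL_ge0: "a \<in> Ab \<Longrightarrow> 0 \<le> nL a" by (rule op_ge0[OF opb_L opl_L])
lemma nR_ge0: "a \<in> Ab \<Longrightarrow> 0 \<le> nR a" by (rule op_ge0[OF opb_R opl_R])
lemma nL_le: "a \<in> Ab \<Longrightarrow> x \<in> A0 \<Longrightarrow> norm (m a x) \<le> nL a * norm x" by (rule op_le[OF opb_L opl_L])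
lemma nR_le: "a \<in> Ab \<Longrightarrow> x \<in> A0 \<Longrightarrow> norm (m x a) \<le> nR a * norm x" by (rule op_le[OF opb_R opl_R])
lemma nL_upper: "a \<in> Ab \<Longrightarrow> x \<in> A0 \<Longrightarrow> norm x \<le> 1 \<Longrightarrow> norm (m a x) \<le> nL a" by (rule op_upper[OF opb_L])
lemma nR_upper: "a \<in> Ab \<Longrightarrow> x \<in> A0 \<Longrightarrow> norm x \<le> 1 \<Longrightarrow> norm (m x a) \<le> nR a" by (rule op_upper[OF opb_R])

lemma Lx_bound: assumes a: "a \<in> Ab" shows "norm (Lx a z) \<le> nL a * norm z"
  by (rule dense_le[OF dense, of "\<lambda>z. norm (Lx a z)" "\<lambda>z. nL a * norm z"])
     (auto intro!: continuous_intros cont_Lx[OF a] simp: Lx(2)[OF a] nL_le[OF a])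

lemma Rx_bound: assumes a: "a \<in> Ab" shows "norm (Rx a z) \<le> nR a * norm z"
  by (rule dense_le[OF dense, of "\<lambda>z. norm (Rx a z)" "\<lambda>z. nR a * norm z"])
     (auto intro!: continuous_intros cont_Rx[OF a] simp: Rx(2)[OF a] nR_le[OF a])

end



context bqa begin

lemma ceq: "continuous_on S f \<Longrightarrow> (\<And>x. x \<in> S \<Longrightarrow> f x = g x) \<Longrightarrow> continuous_on S g"
proof -
  assume c: "continuous_on S f" and e: "\<And>x. x \<in> S \<Longrightarrow> f x = g x"
  have "continuous_on S f = continuous_on S g" by (rule continuous_on_cong) (simp_all add: e)
  thus ?thesis using c by simp
qed

lemma bl_Rinv: "y\<in>A0 \<Longrightarrow> bounded_linear (\<lambda>a. m (invl a) y)"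
  by (rule bounded_linear_compose[OF bl_R bl_invl])

lemma wpR: assumes b: "b \<in> Ab" shows "is_weak_prod A0 m sc invl a b (Rx b a)"
  unfolding is_weak_prod_def
proof (intro ballI)
  fix \<phi> x y assume p: "\<phi> \<in> SF" and x: "x\<in>A0" and y: "y\<in>A0"
  show "\<phi> (m b x) (m (invl a) y) = \<phi> (m (Rx b a) x) y"
  proof (rule dense_eq[OF dense, of "\<lambda>a. \<phi> (m b x) (m (invl a) y)" "\<lambda>a. \<phi> (m (Rx b a) x) y"])
    show "continuous_on UNIV (\<lambda>a. \<phi> (m b x) (m (invl a) y))"
      by (intro cont_phi2[OF p] linear_continuous_on bl_Rinv y)
    show "continuous_on UNIV (\<lambda>a. \<phi> (m (Rx b a) x) y)"
      by (intro cont_phi1[OF p] linear_continuous_on bounded_linear_compose[OF bl_R[OF x] Rx(1)[OF b]])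
    fix a assume a: "a \<in> A0"
    have "m (Rx b a) x = m a (m b x)" using Rx(2)[OF b a] assoc1[OF a x] by simp
    thus "\<phi> (m b x) (m (invl a) y) = \<phi> (m (Rx b a) x) y" using W[OF p a y] by simp
  qed
qed

lemma wpL: assumes a: "a \<in> Ab" shows "is_weak_prod A0 m sc invl a b (Lx a b)"
  unfolding is_weak_prod_def
proof (intro ballI)
  fix \<phi> x y assume p: "\<phi> \<in> SF" and x: "x\<in>A0" and y: "y\<in>A0"
  show "\<phi> (m b x) (m (invl a) y) = \<phi> (m (Lx a b) x) y"
  proof (rule dense_eq[OF dense, of "\<lambda>b. \<phi> (m b x) (m (invl a) y)" "\<lambda>b. \<phi> (m (Lx a b) x) y"])
    show "continuous_on UNIV (\<lambda>b. \<phi> (m b x) (m (invl a) y))"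
      by (intro cont_phi1[OF p] contR'[OF x])
    show "continuous_on UNIV (\<lambda>b. \<phi> (m (Lx a b) x) y)"
      by (intro cont_phi1[OF p] linear_continuous_on bounded_linear_compose[OF bl_R[OF x] Lx(1)[OF a]])
    fix b assume b: "b \<in> A0"
    have "m (Lx a b) x = m a (m b x)" using Lx(2)[OF a b] assoc2[OF b x] by simp
    thus "\<phi> (m b x) (m (invl a) y) = \<phi> (m (Lx a b) x) y" using SF_inv[OF p A0m[OF b x] y] by simp
  qed
qed

lemma P_L: "a \<in> Ab \<Longrightarrow> P a b = Lx a b" by (rule wp_eq[OF wpL])
lemma P_R: "b \<in> Ab \<Longrightarrow> P a b = Rx b a" by (rule wp_eq[OF wpR])

lemma Ab_sub: "Ab \<subseteq> Rw A0 m sc invl \<inter> Lw A0 m sc invl"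
  unfolding Rw_def Lw_def using wpR wpL by blast

lemma Lx_mult: assumes a: "a \<in> Ab" and x: "x \<in> A0" shows "m (Lx a b) x = Lx a (m b x)"
proof (rule dense_eq[OF dense, of "\<lambda>b. m (Lx a b) x" "\<lambda>b. Lx a (m b x)"])
  show "continuous_on UNIV (\<lambda>b. m (Lx a b) x)"
    by (rule linear_continuous_on[OF bounded_linear_compose[OF bl_R[OF x] Lx(1)[OF a]]])
  show "continuous_on UNIV (\<lambda>b. Lx a (m b x))"
    by (rule linear_continuous_on[OF bounded_linear_compose[OF Lx(1)[OF a] bl_R[OF x]]])
  fix b assume b: "b \<in> A0"
  show "m (Lx a b) x = Lx a (m b x)" using Lx(2)[OF a b] Lx(2)[OF a A0m[OF b x]] assoc2[OF b x] by simp
qed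

lemma Rx_mult: assumes b: "b \<in> Ab" and x: "x \<in> A0" shows "m x (Rx b a) = Rx b (m x a)"
proof (rule dense_eq[OF dense, of "\<lambda>a. m x (Rx b a)" "\<lambda>a. Rx b (m x a)"])
  show "continuous_on UNIV (\<lambda>a. m x (Rx b a))"
    by (rule linear_continuous_on[OF bounded_linear_compose[OF bl_L[OF x] Rx(1)[OF b]]])
  show "continuous_on UNIV (\<lambda>a. Rx b (m x a))"
    by (rule linear_continuous_on[OF bounded_linear_compose[OF Rx(1)[OF b] bl_L[OF x]]])
  fix a assume a: "a \<in> A0"
  show "m x (Rx b a) = Rx b (m x a)" using Rx(2)[OF b a] Rx(2)[OF b A0m[OF x a]] assoc3[OF x a] by simp
qed

lemma mi1: "x \<in> A0 \<Longrightarrow> m (invl a) x = invl (m (invl x) a)"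
  using m_left_eq[OF A0invl, of x a] by (simp add: invl_invl)
lemma mi2: "x \<in> A0 \<Longrightarrow> m x (invl a) = invl (m a (invl x))"
  using invl_m[OF A0invl, of x a] by (simp add: invl_invl)

lemma Ab_0: "0 \<in> Ab"
proof (rule AbI)
  show "continuous_on A0 (\<lambda>x. m 0 x)" by (rule ceq[OF continuous_on_const[of A0 0]]) (simp add: mR0)
  show "continuous_on A0 (\<lambda>x. m x 0)" by (rule ceq[OF continuous_on_const[of A0 0]]) (simp add: mL0)
qed

lemma Ab_add: assumes a: "a \<in> Ab" and b: "b \<in> Ab" shows "a + b \<in> Ab"
proof (rule AbI)
  show "continuous_on A0 (\<lambda>x. m (a + b) x)"
    by (rule ceq[OF continuous_on_add[OF AbD(1)[OF a] AbD(1)[OF b]]]) (simp add: maddl0 maddl)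
  show "continuous_on A0 (\<lambda>x. m x (a + b))"
    by (rule ceq[OF continuous_on_add[OF AbD(2)[OF a] AbD(2)[OF b]]]) (simp add: maddr)
qed

lemma Ab_sc: assumes a: "a \<in> Ab" shows "sc z a \<in> Ab"
proof (rule AbI)
  show "continuous_on A0 (\<lambda>x. m (sc z a) x)"
    by (rule ceq[OF bounded_linear.continuous_on[OF bl_sc AbD(1)[OF a]]]) (simp add: msc1)
  show "continuous_on A0 (\<lambda>x. m x (sc z a))"
    by (rule ceq[OF bounded_linear.continuous_on[OF bl_sc AbD(2)[OF a]]]) (simp add: msc3)
qed

lemma Ab_invl: assumes a: "a \<in> Ab" shows "invl a \<in> Ab"
proof (rule AbI)
  have "continuous_on A0 (\<lambda>x. m (invl x) a)"
    by (rule continuous_on_compose2[OF AbD(2)[OF a] cont_invl]) (auto simp: A0invl)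
  hence "continuous_on A0 (\<lambda>x. invl (m (invl x) a))" by (rule bounded_linear.continuous_on[OF bl_invl])
  thus "continuous_on A0 (\<lambda>x. m (invl a) x)" by (rule ceq) (simp add: mi1)
  have "continuous_on A0 (\<lambda>x. m a (invl x))"
    by (rule continuous_on_compose2[OF AbD(1)[OF a] cont_invl]) (auto simp: A0invl)
  hence "continuous_on A0 (\<lambda>x. invl (m a (invl x)))" by (rule bounded_linear.continuous_on[OF bl_invl])
  thus "continuous_on A0 (\<lambda>x. m x (invl a))" by (rule ceq) (simp add: mi2)
qed

lemma Ab_P: assumes a: "a \<in> Ab" and b: "b \<in> Ab" shows "P a b \<in> Ab"
proof (rule AbI)
  have "continuous_on A0 (\<lambda>x. Lx a (m b x))"
    by (rule continuous_on_compose2[OF cont_Lx[OF a] AbD(1)[OF b]]) auto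
  thus "continuous_on A0 (\<lambda>x. m (P a b) x)" by (rule ceq) (simp add: P_L[OF a] Lx_mult[OF a])
  have "continuous_on A0 (\<lambda>x. Rx b (m x a))"
    by (rule continuous_on_compose2[OF cont_Rx[OF b] AbD(2)[OF a]]) auto
  thus "continuous_on A0 (\<lambda>x. m x (P a b))" by (rule ceq) (simp add: P_R[OF b] Rx_mult[OF b])
qed

lemma nL_P: assumes a: "a \<in> Ab" and b: "b \<in> Ab" shows "nL (P a b) \<le> nL a * nL b"
proof (rule op_least)
  fix x assume x: "x \<in> A0" "norm x \<le> 1"
  have "norm (m (P a b) x) = norm (Lx a (m b x))" by (simp add: P_L[OF a] Lx_mult[OF a x(1)])
  also have "\<dots> \<le> nL a * norm (m b x)" by (rule Lx_bound[OF a])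
  also have "\<dots> \<le> nL a * nL b" by (intro mult_left_mono nL_upper[OF b x] nL_ge0[OF a])
  finally show "norm (m (P a b) x) \<le> nL a * nL b" .
qed

lemma nR_P: assumes a: "a \<in> Ab" and b: "b \<in> Ab" shows "nR (P a b) \<le> nR a * nR b"
proof (rule op_least)
  fix x assume x: "x \<in> A0" "norm x \<le> 1"
  have "norm (m x (P a b)) = norm (Rx b (m x a))" by (simp add: P_R[OF b] Rx_mult[OF b x(1)])
  also have "\<dots> \<le> nR b * norm (m x a)" by (rule Rx_bound[OF b])
  also have "\<dots> \<le> nR b * nR a" by (intro mult_left_mono nR_upper[OF a x] nR_ge0[OF b])
  finally show "norm (m x (P a b)) \<le> nR a * nR b" by (simp add: mult.commute)
qed

lemma bnorm_P: assumes a: "a \<in> Ab" and b: "b \<in> Ab" shows "bnorm A0 m (P a b) \<le> bnorm A0 m a * bnorm A0 m b"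
proof -
  have "nL a * nL b \<le> bnorm A0 m a * bnorm A0 m b"
    by (intro mult_mono) (auto simp: bnorm_eq nL_ge0[OF a] nL_ge0[OF b] nR_ge0[OF a] nR_ge0[OF b] le_max_iff_disj)
  moreover have "nR a * nR b \<le> bnorm A0 m a * bnorm A0 m b"
    by (intro mult_mono) (auto simp: bnorm_eq nL_ge0[OF a] nL_ge0[OF b] nR_ge0[OF a] nR_ge0[OF b] le_max_iff_disj)
  ultimately show ?thesis using nL_P[OF a b] nR_P[OF a b] unfolding bnorm_eq[of "P a b"] by linarith
qed

lemma P_assoc: assumes a: "a \<in> Ab" and b: "b \<in> Ab" and c: "c \<in> Ab" shows "P (P a b) c = P a (P b c)"
proof -
  have "Lx (P a b) c = Lx a (Lx b c)"
  proof (rule dense_eq[OF dense, of "Lx (P a b)" "\<lambda>c. Lx a (Lx b c)"])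
    show "continuous_on UNIV (Lx (P a b))" by (rule cont_Lx[OF Ab_P[OF a b]])
    show "continuous_on UNIV (\<lambda>c. Lx a (Lx b c))"
      by (rule linear_continuous_on[OF bounded_linear_compose[OF Lx(1)[OF a] Lx(1)[OF b]]])
    fix c assume c: "c \<in> A0"
    show "Lx (P a b) c = Lx a (Lx b c)"
      using Lx(2)[OF Ab_P[OF a b] c] Lx(2)[OF b c] P_L[OF a] Lx_mult[OF a c] by simp
  qed
  thus ?thesis using P_L a b Ab_P by simp
qed

lemma P_addl: "a \<in> Ab \<Longrightarrow> b \<in> Ab \<Longrightarrow> c \<in> Ab \<Longrightarrow> P (a + b) c = P a c + P b c"
  using P_R linear_simps(1)[OF Rx(1)] by simp
lemma P_addr: "a \<in> Ab \<Longrightarrow> b \<in> Ab \<Longrightarrow> c \<in> Ab \<Longrightarrow> P a (b + c) = P a b + P a c"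
  using P_L linear_simps(1)[OF Lx(1)] by simp

lemma P_scl: assumes a: "a \<in> Ab" and b: "b \<in> Ab" shows "P (sc z a) b = sc z (P a b)"
proof -
  have "Rx b (sc z a) = sc z (Rx b a)"
  proof (rule dense_eq[OF dense, of "\<lambda>a. Rx b (sc z a)" "\<lambda>a. sc z (Rx b a)"])
    show "continuous_on UNIV (\<lambda>a. Rx b (sc z a))"
      by (rule linear_continuous_on[OF bounded_linear_compose[OF Rx(1)[OF b] bl_sc]])
    show "continuous_on UNIV (\<lambda>a. sc z (Rx b a))"
      by (rule linear_continuous_on[OF bounded_linear_compose[OF bl_sc Rx(1)[OF b]]])
    fix a assume a: "a \<in> A0"
    show "Rx b (sc z a) = sc z (Rx b a)" using Rx(2)[OF b A0sc[OF a]] Rx(2)[OF b a] msc4[OF a] by simp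
  qed
  thus ?thesis using P_R[OF b] by simp
qed

lemma P_scr: assumes a: "a \<in> Ab" and b: "b \<in> Ab" shows "P a (sc z b) = sc z (P a b)"
proof -
  have "Lx a (sc z b) = sc z (Lx a b)"
  proof (rule dense_eq[OF dense, of "\<lambda>b. Lx a (sc z b)" "\<lambda>b. sc z (Lx a b)"])
    show "continuous_on UNIV (\<lambda>b. Lx a (sc z b))"
      by (rule linear_continuous_on[OF bounded_linear_compose[OF Lx(1)[OF a] bl_sc]])
    show "continuous_on UNIV (\<lambda>b. sc z (Lx a b))"
      by (rule linear_continuous_on[OF bounded_linear_compose[OF bl_sc Lx(1)[OF a]]])
    fix b assume b: "b \<in> A0"
    show "Lx a (sc z b) = sc z (Lx a b)" using Lx(2)[OF a A0sc[OF b]] Lx(2)[OF a b] msc2[OF b] by simp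
  qed
  thus ?thesis using P_L[OF a] by simp
qed

lemma P_invl: assumes a: "a \<in> Ab" and b: "b \<in> Ab" shows "invl (P a b) = P (invl b) (invl a)"
proof -
  have "invl (Lx a b) = Rx (invl a) (invl b)"
  proof (rule dense_eq[OF dense, of "\<lambda>b. invl (Lx a b)" "\<lambda>b. Rx (invl a) (invl b)"])
    show "continuous_on UNIV (\<lambda>b. invl (Lx a b))"
      by (rule linear_continuous_on[OF bounded_linear_compose[OF bl_invl Lx(1)[OF a]]])
    show "continuous_on UNIV (\<lambda>b. Rx (invl a) (invl b))"
      by (rule linear_continuous_on[OF bounded_linear_compose[OF Rx(1)[OF Ab_invl[OF a]] bl_invl]])
    fix b assume b: "b \<in> A0"
    show "invl (Lx a b) = Rx (invl a) (invl b)"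
      using Lx(2)[OF a b] Rx(2)[OF Ab_invl[OF a] A0invl[OF b]] invl_m[OF b] by simp
  qed
  thus ?thesis using P_L[OF a] P_R[OF Ab_invl[OF a]] by simp
qed

end



context bqa begin

lemma nL_add: assumes a: "a \<in> Ab" and b: "b \<in> Ab" shows "nL (a + b) \<le> nL a + nL b"
proof (rule op_least)
  fix x assume x: "x \<in> A0" "norm x \<le> 1"
  have "norm (m (a + b) x) = norm (m a x + m b x)" by (simp add: maddl x)
  also have "\<dots> \<le> norm (m a x) + norm (m b x)" by (rule norm_triangle_ineq)
  also have "\<dots> \<le> nL a + nL b" using nL_upper[OF a x] nL_upper[OF b x] by linarith
  finally show "norm (m (a + b) x) \<le> nL a + nL b" .
qed

lemma nR_add: assumes a: "a \<in> Ab" and b: "b \<in> Ab" shows "nR (a + b) \<le> nR a + nR b"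
proof (rule op_least)
  fix x assume x: "x \<in> A0" "norm x \<le> 1"
  have "norm (m x (a + b)) = norm (m x a + m x b)" by (simp add: maddr x)
  also have "\<dots> \<le> norm (m x a) + norm (m x b)" by (rule norm_triangle_ineq)
  also have "\<dots> \<le> nR a + nR b" using nR_upper[OF a x] nR_upper[OF b x] by linarith
  finally show "norm (m x (a + b)) \<le> nR a + nR b" .
qed

lemma bnorm_add: assumes a: "a \<in> Ab" and b: "b \<in> Ab"
  shows "bnorm A0 m (a + b) \<le> bnorm A0 m a + bnorm A0 m b"
  unfolding bnorm_eq
  using nL_add[OF a b] nR_add[OF a b] max.cobounded1[of "nL a" "nR a"] max.cobounded2[of "nR a" "nL a"]
    max.cobounded1[of "nL b" "nR b"] max.cobounded2[of "nR b" "nL b"]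
  by (intro max.boundedI) linarith+

lemma nL_sc: assumes a: "a \<in> Ab" shows "nL (sc z a) = cmod z * nL a"
proof (rule antisym)
  show "nL (sc z a) \<le> cmod z * nL a"
  proof (rule op_least)
    fix x assume x: "x \<in> A0" "norm x \<le> 1"
    have "norm (m (sc z a) x) = cmod z * norm (m a x)" by (simp add: msc1 x norm_sc)
    also have "\<dots> \<le> cmod z * nL a" by (intro mult_left_mono nL_upper[OF a x]) auto
    finally show "norm (m (sc z a) x) \<le> cmod z * nL a" .
  qed
  show "cmod z * nL a \<le> nL (sc z a)"
  proof (cases "z = 0")
    case True thus ?thesis using nL_ge0[OF Ab_sc[OF a]] by simp
  next
    case False
    have "nL a \<le> nL (sc z a) / cmod z"
    proof (rule op_least)
      fix x assume x: "x \<in> A0" "norm x \<le> 1"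
      have "norm (m a x) = norm (m (sc z a) x) / cmod z" using False by (simp add: msc1 x norm_sc)
      also have "\<dots> \<le> nL (sc z a) / cmod z" by (intro divide_right_mono nL_upper[OF Ab_sc[OF a] x]) auto
      finally show "norm (m a x) \<le> nL (sc z a) / cmod z" .
    qed
    thus ?thesis using False by (simp add: field_simps)
  qed
qed

lemma nR_sc: assumes a: "a \<in> Ab" shows "nR (sc z a) = cmod z * nR a"
proof (rule antisym)
  show "nR (sc z a) \<le> cmod z * nR a"
  proof (rule op_least)
    fix x assume x: "x \<in> A0" "norm x \<le> 1"
    have "norm (m x (sc z a)) = cmod z * norm (m x a)" by (simp add: msc3 x norm_sc)
    also have "\<dots> \<le> cmod z * nR a" by (intro mult_left_mono nR_upper[OF a x]) auto
    finally show "norm (m x (sc z a)) \<le> cmod z * nR a" .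
  qed
  show "cmod z * nR a \<le> nR (sc z a)"
  proof (cases "z = 0")
    case True thus ?thesis using nR_ge0[OF Ab_sc[OF a]] by simp
  next
    case False
    have "nR a \<le> nR (sc z a) / cmod z"
    proof (rule op_least)
      fix x assume x: "x \<in> A0" "norm x \<le> 1"
      have "norm (m x a) = norm (m x (sc z a)) / cmod z" using False by (simp add: msc3 x norm_sc)
      also have "\<dots> \<le> nR (sc z a) / cmod z" by (intro divide_right_mono nR_upper[OF Ab_sc[OF a] x]) auto
      finally show "norm (m x a) \<le> nR (sc z a) / cmod z" .
    qed
    thus ?thesis using False by (simp add: field_simps)
  qed
qed

lemma bnorm_sc: "a \<in> Ab \<Longrightarrow> bnorm A0 m (sc z a) = cmod z * bnorm A0 m a"
  unfolding bnorm_eq by (simp add: nL_sc nR_sc max_mult_distrib_left)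

lemma nL_invl: "nL (invl a) = nR a"
  by (rule op_reindex) (simp add: mi1 norm_invl)
lemma nR_invl: "nR (invl a) = nL a"
  by (rule op_reindex) (simp add: mi2 norm_invl)
lemma bnorm_invl: "bnorm A0 m (invl a) = bnorm A0 m a"
  unfolding bnorm_eq nL_invl nR_invl by (simp add: max.commute)

lemma bnorm_ge0: "a \<in> Ab \<Longrightarrow> 0 \<le> bnorm A0 m a"
  unfolding bnorm_eq using nL_ge0 by (simp add: le_max_iff_disj)

lemma norm_le_bnorm: assumes a: "a \<in> Ab" shows "norm a \<le> bnorm A0 m a * norm u"
proof -
  have "norm a = norm (m a u)" by (simp add: mu1)
  also have "\<dots> \<le> nL a * norm u" by (rule nL_le[OF a uA0])
  also have "\<dots> \<le> bnorm A0 m a * norm u" unfolding bnorm_eq by (intro mult_right_mono) auto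
  finally show ?thesis .
qed

lemma bnorm_0: "bnorm A0 m 0 = 0"
proof -
  have "nL 0 \<le> 0" by (rule op_least) (simp add: mR0)
  moreover have "nR 0 \<le> 0" by (rule op_least) (simp add: mL0)
  ultimately show ?thesis using bnorm_ge0[OF Ab_0] unfolding bnorm_eq by linarith
qed

lemma bnorm_eq0: assumes a: "a \<in> Ab" shows "bnorm A0 m a = 0 \<longleftrightarrow> a = 0"
  using norm_le_bnorm[OF a] bnorm_0 by auto

lemma sc_m1: "sc (-1) b = - b" using sc_real[of "-1" b] by simp

lemma Ab_minus: "b \<in> Ab \<Longrightarrow> - b \<in> Ab" using Ab_sc[of b "-1"] by (simp add: sc_m1)
lemma Ab_diff: "a \<in> Ab \<Longrightarrow> b \<in> Ab \<Longrightarrow> a - b \<in> Ab" using Ab_add[OF _ Ab_minus] by simp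

lemma mA0_diff: assumes x: "x \<in> A0" and y: "y \<in> A0" shows "m a (x - y) = m a x - m a y"
proof -
  have "m a (x - y) = m a (x + (-1) *\<^sub>R y)" by simp
  also have "\<dots> = m a x + (-1) *\<^sub>R m a y" by (simp only: maddl0[OF x A0scR[OF y]] mR0_scaleR[OF y])
  finally show ?thesis by simp
qed

lemma mA0_diff2: assumes x: "x \<in> A0" and y: "y \<in> A0" shows "m (x - y) a = m x a - m y a"
proof -
  have "m (x - y) a = m (x + (-1) *\<^sub>R y) a" by simp
  also have "\<dots> = m x a + (-1) *\<^sub>R m y a" by (simp only: maddr0[OF x A0scR[OF y]] mL0_scaleR[OF y])
  finally show ?thesis by simp
qed

lemma lip_cont:
  assumes add: "\<And>x y. x \<in> A0 \<Longrightarrow> y \<in> A0 \<Longrightarrow> f (x - y) = f x - f y"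
    and bd: "\<And>x. x \<in> A0 \<Longrightarrow> norm (f x) \<le> K * norm x"
  shows "continuous_on A0 f"
  unfolding continuous_on_iff
proof (intro ballI allI impI)
  fix x e assume x: "x \<in> A0" and e: "(e::real) > 0"
  show "\<exists>d>0. \<forall>x'\<in>A0. dist x' x < d \<longrightarrow> dist (f x') (f x) < e"
  proof (intro exI[of _ "e / (\<bar>K\<bar> + 1)"] conjI ballI impI)
    show "e / (\<bar>K\<bar> + 1) > 0" using e by simp
    fix x' assume x': "x' \<in> A0" "dist x' x < e / (\<bar>K\<bar> + 1)"
    have "dist (f x') (f x) = norm (f (x' - x))" by (simp add: dist_norm add x x')
    also have "\<dots> \<le> K * norm (x' - x)" by (rule bd[OF A0diff[OF x'(1) x]])
    also have "\<dots> \<le> \<bar>K\<bar> * norm (x' - x)" by (intro mult_right_mono) auto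
    also have "\<dots> \<le> \<bar>K\<bar> * (e / (\<bar>K\<bar> + 1))" using x'(2) by (intro mult_left_mono) (auto simp: dist_norm)
    also have "\<dots> < e" using e by (simp add: field_simps)
    finally show "dist (f x') (f x) < e" .
  qed
qed

lemma complete_Ab:
  assumes X: "\<And>n. X n \<in> Ab"
    and C: "\<forall>e>0. \<exists>N. \<forall>k\<ge>N. \<forall>n\<ge>N. bnorm A0 m (X k - X n) < e"
  shows "\<exists>l\<in>Ab. (\<lambda>n. bnorm A0 m (X n - l)) \<longlonglongrightarrow> 0"
proof -
  have "Cauchy X"
  proof (rule metric_CauchyI)
    fix e :: real assume e: "e > 0"
    obtain N where N: "\<And>k n. k \<ge> N \<Longrightarrow> n \<ge> N \<Longrightarrow> bnorm A0 m (X k - X n) < e / (norm u + 1)"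
      using C e by (metis divide_pos_pos norm_ge_zero add_nonneg_pos zero_less_one)
    have "dist (X k) (X n) < e" if "k \<ge> N" "n \<ge> N" for k n
    proof -
      have "dist (X k) (X n) \<le> bnorm A0 m (X k - X n) * norm u"
        using norm_le_bnorm[OF Ab_diff[OF X X]] by (simp add: dist_norm)
      also have "\<dots> \<le> e / (norm u + 1) * norm u"
        using N[OF that] by (intro mult_right_mono) auto
      also have "\<dots> = e * (norm u / (norm u + 1))" by simp
      also have "\<dots> < e * 1"
      proof -
        have p: "0 < norm u + 1" by (simp add: add_nonneg_pos)
        have "norm u / (norm u + 1) < 1" using p by (simp add: pos_divide_less_eq)
        thus ?thesis using e by (intro mult_strict_left_mono) auto
      qed
      finally show ?thesis by simp
    qed
    thus "\<exists>M. \<forall>k\<ge>M. \<forall>n\<ge>M. dist (X k) (X n) < e" by blast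
  qed
  then obtain l where l: "X \<longlonglongrightarrow> l" using Cauchy_convergent_iff convergent_def by blast
  have est: "\<exists>N. \<forall>n\<ge>N. (\<forall>x\<in>A0. norm (m (X n - l) x) \<le> e * norm x) \<and> (\<forall>x\<in>A0. norm (m x (X n - l)) \<le> e * norm x)"
    if e: "e > 0" for e
  proof -
    obtain N where N: "\<And>k n. k \<ge> N \<Longrightarrow> n \<ge> N \<Longrightarrow> bnorm A0 m (X k - X n) < e"
      using C e by metis
    have "\<forall>n\<ge>N. (\<forall>x\<in>A0. norm (m (X n - l) x) \<le> e * norm x) \<and> (\<forall>x\<in>A0. norm (m x (X n - l)) \<le> e * norm x)"
    proof (intro allI impI conjI ballI)
      fix n x assume n: "n \<ge> N" and x: "x \<in> A0"
      have lim1: "(\<lambda>k. m (X n - X k) x) \<longlonglongrightarrow> m (X n - l) x"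
        by (intro bounded_linear.tendsto[OF bl_R[OF x]] tendsto_diff tendsto_const l)
      have lim2: "(\<lambda>k. m x (X n - X k)) \<longlonglongrightarrow> m x (X n - l)"
        by (intro bounded_linear.tendsto[OF bl_L[OF x]] tendsto_diff tendsto_const l)
      have b1: "norm (m (X n - X k) x) \<le> e * norm x" if "k \<ge> N" for k
      proof -
        have "norm (m (X n - X k) x) \<le> nL (X n - X k) * norm x" by (rule nL_le[OF Ab_diff[OF X X] x])
        also have "\<dots> \<le> e * norm x" using N[OF n that] unfolding bnorm_eq by (intro mult_right_mono) auto
        finally show ?thesis .
      qed
      have b2: "norm (m x (X n - X k)) \<le> e * norm x" if "k \<ge> N" for k
      proof -
        have "norm (m x (X n - X k)) \<le> nR (X n - X k) * norm x" by (rule nR_le[OF Ab_diff[OF X X] x])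
        also have "\<dots> \<le> e * norm x" using N[OF n that] unfolding bnorm_eq by (intro mult_right_mono) auto
        finally show ?thesis .
      qed
      show "norm (m (X n - l) x) \<le> e * norm x"
        by (rule LIMSEQ_le_const2[OF tendsto_norm[OF lim1]]) (use b1 in blast)
      show "norm (m x (X n - l)) \<le> e * norm x"
        by (rule LIMSEQ_le_const2[OF tendsto_norm[OF lim2]]) (use b2 in blast)
    qed
    thus ?thesis by blast
  qed
  have inAb: "X n - l \<in> Ab" if "\<forall>x\<in>A0. norm (m (X n - l) x) \<le> e * norm x" "\<forall>x\<in>A0. norm (m x (X n - l)) \<le> e * norm x" for n e
  proof (rule AbI)
    show "continuous_on A0 (\<lambda>x. m (X n - l) x)"
      by (rule lip_cont[of _ e]) (use that in \<open>simp_all add: mA0_diff\<close>)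
  next
    show "continuous_on A0 (\<lambda>x. m x (X n - l))"
      by (rule lip_cont[of _ e]) (use that in \<open>simp_all add: mA0_diff2\<close>)
  qed
  obtain N1 where N1: "\<And>n. n \<ge> N1 \<Longrightarrow> (\<forall>x\<in>A0. norm (m (X n - l) x) \<le> 1 * norm x) \<and> (\<forall>x\<in>A0. norm (m x (X n - l)) \<le> 1 * norm x)"
    using est[of 1] by auto
  have "X N1 - l \<in> Ab" using N1[of N1] inAb by blast
  hence lAb: "l \<in> Ab" using Ab_diff[OF X[of N1] \<open>X N1 - l \<in> Ab\<close>] by simp
  have "(\<lambda>n. bnorm A0 m (X n - l)) \<longlonglongrightarrow> 0"
  proof (rule LIMSEQ_I)
    fix r :: real assume r: "r > 0"
    obtain N where N: "\<And>n. n \<ge> N \<Longrightarrow> (\<forall>x\<in>A0. norm (m (X n - l) x) \<le> (r/2) * norm x) \<and> (\<forall>x\<in>A0. norm (m x (X n - l)) \<le> (r/2) * norm x)"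
      using est[of "r/2"] r by auto
    have "norm (bnorm A0 m (X n - l) - 0) < r" if n: "n \<ge> N" for n
    proof -
      have "nL (X n - l) \<le> r/2"
        by (rule op_least) (use N[OF n] r in \<open>auto intro: order_trans mult_left_le\<close>)
      moreover have "nR (X n - l) \<le> r/2"
        by (rule op_least) (use N[OF n] r in \<open>auto intro: order_trans mult_left_le\<close>)
      ultimately have "bnorm A0 m (X n - l) \<le> r/2" unfolding bnorm_eq by simp
      moreover have "0 \<le> bnorm A0 m (X n - l)" by (rule bnorm_ge0[OF Ab_diff[OF X lAb]])
      ultimately show ?thesis using r by simp
    qed
    thus "\<exists>no. \<forall>n\<ge>no. norm (bnorm A0 m (X n - l) - 0) < r" by blast
  qed
  thus ?thesis using lAb by blast
qed

end



context bqa begin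

lemma inv_ext: assumes p: "\<phi> \<in> SF" and a: "a \<in> Ab"
  shows "\<phi> (Lx a x) y = \<phi> x (Lx (invl a) y)"
proof -
  have ia: "invl a \<in> Ab" by (rule Ab_invl[OF a])
  have 1: "\<phi> (Lx a x) y = \<phi> x (Lx (invl a) y)" if y: "y \<in> A0" for x y
  proof (rule dense_eq[OF dense, of "\<lambda>x. \<phi> (Lx a x) y" "\<lambda>x. \<phi> x (Lx (invl a) y)"])
    show "continuous_on UNIV (\<lambda>x. \<phi> (Lx a x) y)" by (rule cont_phi1[OF p cont_Lx[OF a]])
    show "continuous_on UNIV (\<lambda>x. \<phi> x (Lx (invl a) y))" by (rule linear_continuous_on[OF bl_phi1[OF p]])
    fix x assume x: "x \<in> A0"
    show "\<phi> (Lx a x) y = \<phi> x (Lx (invl a) y)" using Lx(2)[OF a x] Lx(2)[OF ia y] SF_inv[OF p x y] by simp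
  qed
  show ?thesis
  proof (rule dense_eq[OF dense, of "\<lambda>y. \<phi> (Lx a x) y" "\<lambda>y. \<phi> x (Lx (invl a) y)"])
    show "continuous_on UNIV (\<lambda>y. \<phi> (Lx a x) y)" by (rule linear_continuous_on[OF bl_phi2[OF p]])
    show "continuous_on UNIV (\<lambda>y. \<phi> x (Lx (invl a) y))" by (rule cont_phi2[OF p cont_Lx[OF ia]])
  qed (rule 1)
qed

lemma Ab_ss: "star_semisimple Ab Ab P sc invl (bnorm A0 m)"
  unfolding star_semisimple_def
proof (intro ballI impI)
  fix a assume a: "a \<in> Ab" and H: "\<forall>\<psi>\<in>S_forms Ab Ab P sc invl (bnorm A0 m). \<psi> a a = 0"
  show "a = 0"
  proof (rule ccontr)
    assume "a \<noteq> 0"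
    then obtain \<phi> where p: "\<phi> \<in> SF" and pa: "\<phi> a a \<noteq> 0" using SS unfolding star_semisimple_def by blast
    define M where "M = max 1 (norm u)"
    have M: "M \<ge> 1" "norm u \<le> M" by (auto simp: M_def)
    define c where "c = complex_of_real (M^2)"
    have c0: "c \<noteq> 0" using M by (simp add: c_def)
    define \<psi> where "\<psi> x y = \<phi> x y / c" for x y
    have "\<psi> \<in> S_forms Ab Ab P sc invl (bnorm A0 m)"
      unfolding S_forms_def sesquilinear_on_def mem_Collect_eq
    proof (intro conjI ballI allI)
      fix x y z assume "x \<in> Ab" "y \<in> Ab" "z \<in> Ab"
      show "\<psi> (x + y) z = \<psi> x z + \<psi> y z" "\<psi> z (x + y) = \<psi> z x + \<psi> z y"
        by (simp_all add: \<psi>_def SF_D[OF p] add_divide_distrib)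
    next
      fix w x y assume "x \<in> Ab" "y \<in> Ab"
      show "\<psi> (sc w x) y = w * \<psi> x y" "\<psi> x (sc w y) = cnj w * \<psi> x y"
        by (simp_all add: \<psi>_def SF_D[OF p])
    next
      fix x assume "x \<in> Ab"
      have "0 \<le> \<phi> x x" by (rule SF_D(5)[OF p])
      thus "0 \<le> \<psi> x x" using M by (simp add: \<psi>_def c_def less_eq_complex_def Re_divide_of_real Im_divide_of_real)
    next
      fix b x y assume b: "b \<in> Ab" and x: "x \<in> Ab" and y: "y \<in> Ab"
      show "\<psi> (P b x) y = \<psi> x (P (invl b) y)"
        using inv_ext[OF p b] by (simp add: \<psi>_def P_L[OF b] P_L[OF Ab_invl[OF b]])
    next
      fix x y assume x: "x \<in> Ab" and y: "y \<in> Ab"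
      have "cmod (\<phi> x y) \<le> norm x * norm y" by (rule SF_D(6)[OF p])
      also have "\<dots> \<le> (bnorm A0 m x * M) * (bnorm A0 m y * M)"
      proof (intro mult_mono)
        show "norm x \<le> bnorm A0 m x * M"
          using norm_le_bnorm[OF x] mult_left_mono[OF M(2) bnorm_ge0[OF x]] by linarith
        show "norm y \<le> bnorm A0 m y * M"
          using norm_le_bnorm[OF y] mult_left_mono[OF M(2) bnorm_ge0[OF y]] by linarith
        show "0 \<le> bnorm A0 m x * M" using bnorm_ge0[OF x] M by simp
      qed simp
      finally have "cmod (\<phi> x y) \<le> bnorm A0 m x * bnorm A0 m y * M^2" by (simp add: power2_eq_square mult_ac)
      thus "cmod (\<psi> x y) \<le> bnorm A0 m x * bnorm A0 m y"
        proof -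
        have "cmod c = M^2" using M by (simp add: c_def norm_power)
        thus ?thesis using M \<open>cmod (\<phi> x y) \<le> bnorm A0 m x * bnorm A0 m y * M^2\<close>
          by (simp add: \<psi>_def norm_divide pos_divide_le_eq)
      qed
    qed
    hence "\<psi> a a = 0" using H by blast
    hence "\<phi> a a = 0" using c0 by (simp add: \<psi>_def)
    thus False using pa by simp
  qed
qed

lemma wp_some: "b \<in> Rw A0 m sc invl \<Longrightarrow> is_weak_prod A0 m sc invl a b (P a b)"
  unfolding Rw_def using wp_ex by blast
lemma wp_some2: "b \<in> Lw A0 m sc invl \<Longrightarrow> is_weak_prod A0 m sc invl b a (P b a)"
  unfolding Lw_def using wp_ex by blast

lemma Rw_cont: assumes b: "b \<in> Rw A0 m sc invl" shows "continuous_on A0 (\<lambda>x. m x b)"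
proof -
  define T where "T a = P a b" for a
  have wT: "\<And>\<phi> x y a. \<phi> \<in> SF \<Longrightarrow> x \<in> A0 \<Longrightarrow> y \<in> A0 \<Longrightarrow> \<phi> (m b x) (m (invl a) y) = \<phi> (m (T a) x) y"
    using wp_some[OF b] unfolding is_weak_prod_def T_def by blast
  have lin: "linear T"
  proof (rule linearI)
    fix a a'
    show "T (a + a') = T a + T a'"
      unfolding T_def[of "a + a'"]
    proof (rule wp_eq)
      show "is_weak_prod A0 m sc invl (a + a') b (T a + T a')"
        unfolding is_weak_prod_def
        by (auto simp: invl_add maddl SF_D wT)
    qed
  next
    fix r a
    show "T (r *\<^sub>R a) = r *\<^sub>R T a"
      unfolding T_def[of "r *\<^sub>R a"]
    proof (rule wp_eq)
      show "is_weak_prod A0 m sc invl (r *\<^sub>R a) b (r *\<^sub>R T a)"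
        unfolding is_weak_prod_def
        by (auto simp: invl_scaleR mR_scaleR linear_simps(5)[OF bl_phi1] linear_simps(5)[OF bl_phi2] wT)
    qed
  qed
  have cg: "T a = c" if X: "X \<longlonglongrightarrow> a" and TX: "(\<lambda>n. T (X n)) \<longlonglongrightarrow> c" for X a c
    unfolding T_def
  proof (rule wp_eq)
    show "is_weak_prod A0 m sc invl a b c"
      unfolding is_weak_prod_def
    proof (intro ballI)
      fix \<phi> x y assume p: "\<phi> \<in> SF" and x: "x \<in> A0" and y: "y \<in> A0"
      have l1: "(\<lambda>n. \<phi> (m b x) (m (invl (X n)) y)) \<longlonglongrightarrow> \<phi> (m b x) (m (invl a) y)"
        by (rule bounded_linear.tendsto[OF bounded_linear_compose[OF bl_phi2[OF p] bl_Rinv[OF y]] X])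
      have l2: "(\<lambda>n. \<phi> (m (T (X n)) x) y) \<longlonglongrightarrow> \<phi> (m c x) y"
        by (rule bounded_linear.tendsto[OF bounded_linear_compose[OF bl_phi1[OF p] bl_R[OF x]] TX])
      have "(\<lambda>n. \<phi> (m (T (X n)) x) y) \<longlonglongrightarrow> \<phi> (m b x) (m (invl a) y)"
        using l1 by (simp only: wT[OF p x y])
      thus "\<phi> (m b x) (m (invl a) y) = \<phi> (m c x) y" using l2 by (rule LIMSEQ_unique)
    qed
  qed
  have bl: "bounded_linear T" by (rule closed_graph_bounded[OF lin cg])
  have Tx: "T x = m x b" if x: "x \<in> A0" for x
    unfolding T_def
  proof (rule wp_eq)
    show "is_weak_prod A0 m sc invl x b (m x b)"
      unfolding is_weak_prod_def
    proof (intro ballI)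
      fix \<phi> x' y assume p: "\<phi> \<in> SF" and x': "x' \<in> A0" and y: "y \<in> A0"
      show "\<phi> (m b x') (m (invl x) y) = \<phi> (m (m x b) x') y"
        using assoc1[OF x x'] W[OF p x y] by simp
    qed
  qed
  show ?thesis by (rule ceq[OF linear_continuous_on[OF bl]]) (rule Tx)
qed

lemma Lw_cont: assumes b: "b \<in> Lw A0 m sc invl" shows "continuous_on A0 (\<lambda>x. m b x)"
proof -
  define T where "T a = P b a" for a
  have wT: "\<And>\<phi> x y a. \<phi> \<in> SF \<Longrightarrow> x \<in> A0 \<Longrightarrow> y \<in> A0 \<Longrightarrow> \<phi> (m a x) (m (invl b) y) = \<phi> (m (T a) x) y"
    using wp_some2[OF b] unfolding is_weak_prod_def T_def by blast
  have lin: "linear T"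
  proof (rule linearI)
    fix a a'
    show "T (a + a') = T a + T a'"
      unfolding T_def[of "a + a'"]
    proof (rule wp_eq)
      show "is_weak_prod A0 m sc invl b (a + a') (T a + T a')"
        unfolding is_weak_prod_def
        by (auto simp: maddl SF_D wT)
    qed
  next
    fix r a
    show "T (r *\<^sub>R a) = r *\<^sub>R T a"
      unfolding T_def[of "r *\<^sub>R a"]
    proof (rule wp_eq)
      show "is_weak_prod A0 m sc invl b (r *\<^sub>R a) (r *\<^sub>R T a)"
        unfolding is_weak_prod_def
        by (auto simp: mR_scaleR linear_simps(5)[OF bl_phi1] wT)
    qed
  qed
  have cg: "T a = c" if X: "X \<longlonglongrightarrow> a" and TX: "(\<lambda>n. T (X n)) \<longlonglongrightarrow> c" for X a c
    unfolding T_def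
  proof (rule wp_eq)
    show "is_weak_prod A0 m sc invl b a c"
      unfolding is_weak_prod_def
    proof (intro ballI)
      fix \<phi> x y assume p: "\<phi> \<in> SF" and x: "x \<in> A0" and y: "y \<in> A0"
      have l1: "(\<lambda>n. \<phi> (m (X n) x) (m (invl b) y)) \<longlonglongrightarrow> \<phi> (m a x) (m (invl b) y)"
        by (rule bounded_linear.tendsto[OF bounded_linear_compose[OF bl_phi1[OF p] bl_R[OF x]] X])
      have l2: "(\<lambda>n. \<phi> (m (T (X n)) x) y) \<longlonglongrightarrow> \<phi> (m c x) y"
        by (rule bounded_linear.tendsto[OF bounded_linear_compose[OF bl_phi1[OF p] bl_R[OF x]] TX])
      have "(\<lambda>n. \<phi> (m (T (X n)) x) y) \<longlonglongrightarrow> \<phi> (m a x) (m (invl b) y)"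
        using l1 by (simp only: wT[OF p x y])
      thus "\<phi> (m a x) (m (invl b) y) = \<phi> (m c x) y" using l2 by (rule LIMSEQ_unique)
    qed
  qed
  have bl: "bounded_linear T" by (rule closed_graph_bounded[OF lin cg])
  have Tx: "T x = m b x" if x: "x \<in> A0" for x
    unfolding T_def
  proof (rule wp_eq)
    show "is_weak_prod A0 m sc invl b x (m b x)"
      unfolding is_weak_prod_def
    proof (intro ballI)
      fix \<phi> x' y assume p: "\<phi> \<in> SF" and x': "x' \<in> A0" and y: "y \<in> A0"
      show "\<phi> (m x x') (m (invl b) y) = \<phi> (m (m b x) x') y"
        using assoc2[OF x x'] SF_inv[OF p A0m[OF x x'] y] by simp
    qed
  qed
  show ?thesis by (rule ceq[OF linear_continuous_on[OF bl]]) (rule Tx)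
qed

lemma Ab_eq: "Ab = Rw A0 m sc invl \<inter> Lw A0 m sc invl"
  using Ab_sub Rw_cont Lw_cont AbI by blast

lemma Ab_bsa: "banach_star_algebra_on Ab sc P invl (bnorm A0 m)"
  unfolding banach_star_algebra_on_def
proof (intro conjI ballI allI impI)
  show "0 \<in> Ab" by (rule Ab_0)
  fix a b c assume a: "a \<in> Ab" and b: "b \<in> Ab" and c: "c \<in> Ab"
  show "a + b \<in> Ab" by (rule Ab_add[OF a b])
  show "P a b \<in> Ab" by (rule Ab_P[OF a b])
  show "P (P a b) c = P a (P b c)" by (rule P_assoc[OF a b c])
  show "P (a + b) c = P a c + P b c" by (rule P_addl[OF a b c])
  show "P a (b + c) = P a b + P a c" by (rule P_addr[OF a b c])
next
  fix z a assume a: "a \<in> Ab"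
  show "sc z a \<in> Ab" by (rule Ab_sc[OF a])
  show "bnorm A0 m (sc z a) = cmod z * bnorm A0 m a" by (rule bnorm_sc[OF a])
next
  fix a assume a: "a \<in> Ab"
  show "invl a \<in> Ab" by (rule Ab_invl[OF a])
  show "0 \<le> bnorm A0 m a" by (rule bnorm_ge0[OF a])
  show "bnorm A0 m a = 0 \<longleftrightarrow> a = 0" by (rule bnorm_eq0[OF a])
  show "bnorm A0 m (invl a) = bnorm A0 m a" by (rule bnorm_invl)
next
  fix z a b assume a: "a \<in> Ab" and b: "b \<in> Ab"
  show "P (sc z a) b = sc z (P a b)" by (rule P_scl[OF a b])
  show "P a (sc z b) = sc z (P a b)" by (rule P_scr[OF a b])
next
  fix a b assume a: "a \<in> Ab" and b: "b \<in> Ab"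
  show "invl (P a b) = P (invl b) (invl a)" by (rule P_invl[OF a b])
  show "bnorm A0 m (a + b) \<le> bnorm A0 m a + bnorm A0 m b" by (rule bnorm_add[OF a b])
  show "bnorm A0 m (P a b) \<le> bnorm A0 m a * bnorm A0 m b" by (rule bnorm_P[OF a b])
next
  fix X :: "nat \<Rightarrow> 'a"
  assume "\<forall>n. X n \<in> Ab" "\<forall>e>0. \<exists>N. \<forall>k\<ge>N. \<forall>n\<ge>N. bnorm A0 m (X k - X n) < e"
  thus "\<exists>l\<in>Ab. (\<lambda>n. bnorm A0 m (X n - l)) \<longlonglongrightarrow> 0" using complete_Ab by blast
qed

end

theorem lemma2p16:
  fixes sc :: "complex \<Rightarrow> 'a::banach \<Rightarrow> 'a"
    and A0 :: "'a set" and m :: "'a \<Rightarrow> 'a \<Rightarrow> 'a" and invl :: "'a \<Rightarrow> 'a" and u :: 'a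
  assumes "banach_quasi_star_algebra sc A0 m invl u"
    and "star_semisimple UNIV A0 m sc invl norm"
  shows "banach_star_algebra_on (bounded_elems A0 m) sc (weak_prod A0 m sc invl) invl (bnorm A0 m)
       \<and> star_semisimple (bounded_elems A0 m) (bounded_elems A0 m) (weak_prod A0 m sc invl)
            sc invl (bnorm A0 m)
       \<and> bounded_elems A0 m = Rw A0 m sc invl \<inter> Lw A0 m sc invl"
  proof -
  interpret bqa sc A0 m invl u by (rule bqa.intro[OF assms(1) assms(2)])
  show ?thesis using Ab_bsa Ab_ss Ab_eq by blast
qed

end
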